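(* For all integers $s_1,s_2\ge1$ the bi-brackets $\left[\begin{matrix}s_1,s_2\\ 1,0\end{matrix}\right]$ and $\left[\begin{matrix}s_1,s_2\\ 0,1\end{matrix}\right]$ lie in $\operatorname{Fil}^{W,L}_{s_1+s_2+1,\,3}(\mathcal{MD})$, i.e. each is a $\mathbb{Q}$-linear combination of $1$ and brackets $[t_1,\dots,t_m]$ with $m\le3$ and $t_1+\dots+t_m\le s_1+s_2+1$.
   Context: Bi-brackets: for integers $s_j\ge1$, $r_j\ge0$, \[ \left[\begin{matrix}s_1,\dots,s_l\\ r_1,\dots,r_l\end{matrix}\right]:=\sum_{\substack{u_1>\dots>u_l>0\\ v_1,\dots,v_l>0}}\prod_{j=1}^{l}\frac{u_j^{r_j}}{r_j!}\,\frac{v_j^{s_j-1}}{(s_j-1)!}\;q^{u_1v_1+\dots+u_lv_l}\in\mathbb{Q}[[q]]. \] Brackets: $[t_1,\dots,t_m]:=\left[\begin{matrix}t_1,\dots,t_m\\ 0,\dots,0\end{matrix}\right]$ ($t_j\ge1$), of weight $t_1+\dots+t_m$ and length $m$. $\mathcal{MD}$ is the $\mathbb{Q}$-span of $1$ and all brackets, and $\operatorname{Fil}^{W,L}_{k,l}(\mathcal{MD})$ is the $\mathbb{Q}$-span of $1$ and the brackets of length $m\le \min(k,l)$ and weight $\le k$. *)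

theory Defs
  imports "HOL-Computational_Algebra.Formal_Power_Series"
begin

definition bb_index :: "nat \<Rightarrow> nat \<Rightarrow> (nat list \<times> nat list) set" where
  "bb_index l N = {(us, vs). length us = l \<and> length vs = l \<and> sorted_wrt (>) us \<and>
      (\<forall>u\<in>set us. u > 0) \<and> (\<forall>v\<in>set vs. v > 0) \<and>
      (\<Sum>j<l. us ! j * vs ! j) = N}"

text \<open>Bi-bracket with upper row ss = (s_1,...,s_l) and lower row rs = (r_1,...,r_l),
  as a formal power series in q over the rationals.\<close>
definition bibracket :: "nat list \<Rightarrow> nat list \<Rightarrow> rat fps" where
  "bibracket ss rs = Abs_fps (\<lambda>N. \<Sum>(us, vs)\<in>bb_index (length ss) N.
      \<Prod>j<length ss. (of_nat (us ! j) ^ (rs ! j) / fact (rs ! j)) *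
                      (of_nat (vs ! j) ^ (ss ! j - 1) / fact (ss ! j - 1)))"

definition bracket :: "nat list \<Rightarrow> rat fps" where
  "bracket ts = bibracket ts (replicate (length ts) 0)"

definition Fil_WL :: "nat \<Rightarrow> nat \<Rightarrow> rat fps set" where
  "Fil_WL k l = {f. \<exists>(c0::rat) (T::nat list set) (a::nat list \<Rightarrow> rat).
      finite T \<and>
      (\<forall>ts\<in>T. 1 \<le> length ts \<and> length ts \<le> min k l \<and> (\<forall>t\<in>set ts. 1 \<le> t) \<and> sum_list ts \<le> k) \<and>
      f = fps_const c0 + (\<Sum>ts\<in>T. fps_const (a ts) * bracket ts)}"

end

theory Submission
  imports Defs
begin

unbundle fps_syntax


definition B1 :: "nat \<Rightarrow> (nat \<times> nat) set" where
  "B1 N = {(u,v). 0<u \<and> 0<v \<and> u*v = N}"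
definition S1 :: "(nat \<Rightarrow> nat \<Rightarrow> rat) \<Rightarrow> rat fps" where
  "S1 W = Abs_fps (\<lambda>N. \<Sum>(u,v)\<in>B1 N. W u v)"
definition B2 :: "nat \<Rightarrow> (nat \<times> nat \<times> nat \<times> nat) set" where
  "B2 N = {(u1,u2,v1,v2). u2<u1 \<and> 0<u2 \<and> 0<v1 \<and> 0<v2 \<and> u1*v1+u2*v2 = N}"
definition S2 :: "(nat \<Rightarrow> nat \<Rightarrow> nat \<Rightarrow> nat \<Rightarrow> rat) \<Rightarrow> rat fps" where
  "S2 W = Abs_fps (\<lambda>N. \<Sum>(u1,u2,v1,v2)\<in>B2 N. W u1 u2 v1 v2)"
definition B3 :: "nat \<Rightarrow> (nat \<times> nat \<times> nat \<times> nat \<times> nat \<times> nat) set" where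
  "B3 N = {(u1,u2,u3,v1,v2,v3). u2<u1 \<and> u3<u2 \<and> 0<u3 \<and> 0<v1 \<and> 0<v2 \<and> 0<v3 \<and> u1*v1+u2*v2+u3*v3 = N}"
definition S3 :: "(nat \<Rightarrow> nat \<Rightarrow> nat \<Rightarrow> nat \<Rightarrow> nat \<Rightarrow> nat \<Rightarrow> rat) \<Rightarrow> rat fps" where
  "S3 W = Abs_fps (\<lambda>N. \<Sum>(u1,u2,u3,v1,v2,v3)\<in>B3 N. W u1 u2 u3 v1 v2 v3)"

lemma le_mult_pos: "0 < v \<Longrightarrow> u \<le> u * (v::nat)"
  by simp

lemma finite_B1: "finite (B1 N)"
proof -
  have "B1 N \<subseteq> {..N} \<times> {..N}"
    by (auto simp: B1_def)
  then show ?thesis by (rule finite_subset) auto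
qed

lemma finite_B2: "finite (B2 N)"
proof -
  have "B2 N \<subseteq> {..N} \<times> {..N} \<times> {..N} \<times> {..N}"
  proof
    fix x assume "x \<in> B2 N"
    then obtain u1 u2 v1 v2 where x: "x = (u1,u2,v1,v2)" and h: "u2<u1" "0<u2" "0<v1" "0<v2" "u1*v1+u2*v2 = N"
      by (auto simp: B2_def)
    have f: "u1 \<le> u1*v1" "u2 \<le> u2*v2" "v1 \<le> u1*v1" "v2 \<le> u2 * v2" using h by simp_all
    have "u1 \<le> N" "u2 \<le> N" "v1 \<le> N" "v2 \<le> N" using f h(5) by linarith+
    then show "x \<in> {..N} \<times> {..N} \<times> {..N} \<times> {..N}" using x by auto
  qed
  then show ?thesis by (rule finite_subset) auto
qed

lemma finite_B3: "finite (B3 N)"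
proof -
  have "B3 N \<subseteq> {..N} \<times> {..N} \<times> {..N} \<times> {..N} \<times> {..N} \<times> {..N}"
  proof
    fix x assume "x \<in> B3 N"
    then obtain u1 u2 u3 v1 v2 v3 where x: "x = (u1,u2,u3,v1,v2,v3)" and h: "u2<u1" "u3<u2" "0<u3" "0<v1" "0<v2" "0<v3" "u1*v1+u2*v2+u3*v3 = N"
      by (auto simp: B3_def)
    have f: "u1 \<le> u1*v1" "u2 \<le> u2*v2" "u3 \<le> u3*v3" "v1 \<le> u1*v1" "v2 \<le> u2 * v2" "v3 \<le> u3*v3" using h by simp_all
    have "u1 \<le> N" "u2 \<le> N" "u3 \<le> N" "v1 \<le> N" "v2 \<le> N" "v3 \<le> N" using f h(7) by linarith+
    then show "x \<in> {..N} \<times> {..N} \<times> {..N} \<times> {..N} \<times> {..N} \<times> {..N}" using x by auto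
  qed
  then show ?thesis by (rule finite_subset) auto
qed

lemma bb_index1: "(\<Sum>x\<in>bb_index 1 N. F x) = (\<Sum>(u,v)\<in>B1 N. F ([u],[v]))"
  apply (rule sum.reindex_bij_witness[where j="\<lambda>(us,vs). (us!0, vs!0)" and i="\<lambda>(u,v). ([u],[v])"])
  apply (auto simp: bb_index_def B1_def length_Suc_conv)
  done

lemma bb_index2: "(\<Sum>x\<in>bb_index 2 N. F x) = (\<Sum>(u1,u2,v1,v2)\<in>B2 N. F ([u1,u2],[v1,v2]))"
  apply (rule sum.reindex_bij_witness[where j="\<lambda>(us,vs). (us!0, us!1, vs!0, vs!1)" and i="\<lambda>(u1,u2,v1,v2). ([u1,u2],[v1,v2])"])
  apply (auto simp: bb_index_def B2_def length_Suc_conv numeral_2_eq_2)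
  done

lemma bb_index3: "(\<Sum>x\<in>bb_index 3 N. F x) = (\<Sum>(u1,u2,u3,v1,v2,v3)\<in>B3 N. F ([u1,u2,u3],[v1,v2,v3]))"
  apply (rule sum.reindex_bij_witness[where j="\<lambda>(us,vs). (us!0, us!1, us!2, vs!0, vs!1, vs!2)" and i="\<lambda>(u1,u2,u3,v1,v2,v3). ([u1,u2,u3],[v1,v2,v3])"])
  apply (auto simp: bb_index_def B3_def length_Suc_conv numeral_3_eq_3 add.assoc)
  done



lemma S1_add: "S1 (\<lambda>u v. f u v + g u v) = S1 f + S1 g"
  by (simp add: S1_def fps_eq_iff sum.distrib split_def)
lemma S2_add: "S2 (\<lambda>u1 u2 v1 v2. f u1 u2 v1 v2 + g u1 u2 v1 v2) = S2 f + S2 g"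
  by (simp add: S2_def fps_eq_iff sum.distrib split_def)
lemma S3_add: "S3 (\<lambda>u1 u2 u3 v1 v2 v3. f u1 u2 u3 v1 v2 v3 + g u1 u2 u3 v1 v2 v3) = S3 f + S3 g"
  by (simp add: S3_def fps_eq_iff sum.distrib split_def)
lemma S1_cmult: "S1 (\<lambda>u v. c * f u v) = fps_const c * S1 f"
  by (simp add: S1_def fps_eq_iff sum_distrib_left split_def)
lemma S2_cmult: "S2 (\<lambda>u1 u2 v1 v2. c * f u1 u2 v1 v2) = fps_const c * S2 f"
  by (simp add: S2_def fps_eq_iff sum_distrib_left split_def)
lemma S3_cmult: "S3 (\<lambda>u1 u2 u3 v1 v2 v3. c * f u1 u2 u3 v1 v2 v3) = fps_const c * S3 f"
  by (simp add: S3_def fps_eq_iff sum_distrib_left split_def)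

lemma S1_cong: "(\<And>u v. 0<u \<Longrightarrow> 0<v \<Longrightarrow> f u v = g u v) \<Longrightarrow> S1 f = S1 g"
  by (auto simp: S1_def fps_eq_iff B1_def intro!: sum.cong)
lemma S2_cong: "(\<And>u1 u2 v1 v2. u2<u1 \<Longrightarrow> 0<u2 \<Longrightarrow> 0<v1 \<Longrightarrow> 0<v2 \<Longrightarrow> f u1 u2 v1 v2 = g u1 u2 v1 v2) \<Longrightarrow> S2 f = S2 g"
  by (auto simp: S2_def fps_eq_iff B2_def intro!: sum.cong)
lemma S3_cong: "(\<And>u1 u2 u3 v1 v2 v3. u2<u1 \<Longrightarrow> u3<u2 \<Longrightarrow> 0<u3 \<Longrightarrow> 0<v1 \<Longrightarrow> 0<v2 \<Longrightarrow> 0<v3 \<Longrightarrow>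
   f u1 u2 u3 v1 v2 v3 = g u1 u2 u3 v1 v2 v3) \<Longrightarrow> S3 f = S3 g"
  by (auto simp: S3_def fps_eq_iff B3_def intro!: sum.cong)

lemma conj1: "S1 W = S1 (\<lambda>u v. W v u)"
  unfolding S1_def
  by (rule arg_cong[where f=Abs_fps], rule ext, rule sum.reindex_bij_witness[where i="\<lambda>(u,v). (v,u)" and j="\<lambda>(u,v). (v,u)"])
     (auto simp: B1_def)

lemma conj2: "S2 W = S2 (\<lambda>u1 u2 v1 v2. W (v1+v2) v1 u2 (u1-u2))"
  unfolding S2_def
proof (rule arg_cong[where f=Abs_fps], rule ext, rule sum.reindex_bij_witness[where i="\<lambda>(u1,u2,v1,v2). (v1+v2, v1, u2, u1-u2)" and j="\<lambda>(u1,u2,v1,v2). (v1+v2, v1, u2, u1-u2)"])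
  fix N
  have key: "(v1+v2)*u2 + v1*(u1-u2) = u1*v1+u2*v2" if "u2 < u1" for u1 u2 v1 v2 :: nat
  proof -
    obtain d where "u1 = u2 + d" using \<open>u2 < u1\<close> less_imp_add_positive by blast
    then show ?thesis by (simp add: algebra_simps)
  qed
  show "\<And>a. a \<in> B2 N \<Longrightarrow> (case case a of (u1, u2, v1, v2) \<Rightarrow> (v1 + v2, v1, u2, u1 - u2) of
           (u1, u2, v1, v2) \<Rightarrow> (v1 + v2, v1, u2, u1 - u2)) = a" by (auto simp: B2_def)
  show "\<And>a. a \<in> B2 N \<Longrightarrow> (case a of (u1, u2, v1, v2) \<Rightarrow> (v1 + v2, v1, u2, u1 - u2)) \<in> B2 N"
    using key by (auto simp: B2_def)
  show "\<And>a. a \<in> B2 N \<Longrightarrow> (case case a of (u1, u2, v1, v2) \<Rightarrow> (v1 + v2, v1, u2, u1 - u2) of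
           (u1, u2, v1, v2) \<Rightarrow> (v1 + v2, v1, u2, u1 - u2)) = a" by (auto simp: B2_def)
  show "\<And>a. a \<in> B2 N \<Longrightarrow> (case a of (u1, u2, v1, v2) \<Rightarrow> (v1 + v2, v1, u2, u1 - u2)) \<in> B2 N"
    using key by (auto simp: B2_def)
  show "\<And>a. a \<in> B2 N \<Longrightarrow>
         (case case a of (u1, u2, v1, v2) \<Rightarrow> (v1 + v2, v1, u2, u1 - u2) of
          (u1, u2, v1, v2) \<Rightarrow> W (v1 + v2) v1 u2 (u1 - u2)) =
         (case a of (u1, u2, v1, v2) \<Rightarrow> W u1 u2 v1 v2)" by (auto simp: B2_def)
qed

lemma conj3: "S3 W = S3 (\<lambda>u1 u2 u3 v1 v2 v3. W (v1+v2+v3) (v1+v2) v1 u3 (u2-u3) (u1-u2))"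
  unfolding S3_def
proof (rule arg_cong[where f=Abs_fps], rule ext, rule sum.reindex_bij_witness[where i="\<lambda>(u1,u2,u3,v1,v2,v3). (v1+v2+v3, v1+v2, v1, u3, u2-u3, u1-u2)" and j="\<lambda>(u1,u2,u3,v1,v2,v3). (v1+v2+v3, v1+v2, v1, u3, u2-u3, u1-u2)"])
  fix N
  have key: "(v1+v2+v3)*u3 + (v1+v2)*(u2-u3) + v1*(u1-u2) = u1*v1+u2*v2+u3*v3" if "u2 < u1" "u3 < u2" for u1 u2 u3 v1 v2 v3 :: nat
  proof -
    obtain d where d: "u1 = u2 + d" using \<open>u2 < u1\<close> less_imp_add_positive by blast
    obtain e where e: "u2 = u3 + e" using \<open>u3 < u2\<close> less_imp_add_positive by blast
    show ?thesis unfolding d e by (simp add: algebra_simps)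
  qed
  fix a assume a: "a \<in> B3 N"
  then show "(case case a of (u1,u2,u3,v1,v2,v3) \<Rightarrow> (v1+v2+v3, v1+v2, v1, u3, u2-u3, u1-u2) of
      (u1,u2,u3,v1,v2,v3) \<Rightarrow> (v1+v2+v3, v1+v2, v1, u3, u2-u3, u1-u2)) = a" by (auto simp: B3_def)
  from a show "(case a of (u1,u2,u3,v1,v2,v3) \<Rightarrow> (v1+v2+v3, v1+v2, v1, u3, u2-u3, u1-u2)) \<in> B3 N"
    using key by (auto simp: B3_def)
  from a show "(case case a of (u1,u2,u3,v1,v2,v3) \<Rightarrow> (v1+v2+v3, v1+v2, v1, u3, u2-u3, u1-u2) of
      (u1,u2,u3,v1,v2,v3) \<Rightarrow> (v1+v2+v3, v1+v2, v1, u3, u2-u3, u1-u2)) = a" by (auto simp: B3_def)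
  from a show "(case a of (u1,u2,u3,v1,v2,v3) \<Rightarrow> (v1+v2+v3, v1+v2, v1, u3, u2-u3, u1-u2)) \<in> B3 N"
    using key by (auto simp: B3_def)
  from a show "(case case a of (u1,u2,u3,v1,v2,v3) \<Rightarrow> (v1+v2+v3, v1+v2, v1, u3, u2-u3, u1-u2) of
      (u1,u2,u3,v1,v2,v3) \<Rightarrow> W (v1+v2+v3) (v1+v2) v1 u3 (u2-u3) (u1-u2)) = (case a of (u1,u2,u3,v1,v2,v3) \<Rightarrow> W u1 u2 u3 v1 v2 v3)"
    by (auto simp: B3_def)
qed



lemma bb_index1': "(\<Sum>x\<in>bb_index (Suc 0) N. F x) = (\<Sum>(u,v)\<in>B1 N. F ([u],[v]))"
  using bb_index1 by simp
lemma bb_index2': "(\<Sum>x\<in>bb_index (Suc (Suc 0)) N. F x) = (\<Sum>(u1,u2,v1,v2)\<in>B2 N. F ([u1,u2],[v1,v2]))"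
  using bb_index2 by (simp add: numeral_2_eq_2)
lemma bb_index3': "(\<Sum>x\<in>bb_index (Suc (Suc (Suc 0))) N. F x) = (\<Sum>(u1,u2,u3,v1,v2,v3)\<in>B3 N. F ([u1,u2,u3],[v1,v2,v3]))"
  using bb_index3 by (simp add: numeral_3_eq_3)

lemma bracket1: "bracket [t] = S1 (\<lambda>u v. of_nat v ^ (t-1) / fact (t-1))"
  unfolding bracket_def bibracket_def S1_def
  by (simp add: bb_index1' split_def)

lemma bracket2: "bracket [t1,t2] = S2 (\<lambda>u1 u2 v1 v2. of_nat v1 ^ (t1-1) / fact (t1-1) * (of_nat v2 ^ (t2-1) / fact (t2-1)))"
  unfolding bracket_def bibracket_def S2_def
  by (simp add: bb_index2' split_def numeral_2_eq_2)

lemma bracket3: "bracket [t1,t2,t3] = S3 (\<lambda>u1 u2 u3 v1 v2 v3. of_nat v1 ^ (t1-1) / fact (t1-1) * (of_nat v2 ^ (t2-1) / fact (t2-1)) * (of_nat v3 ^ (t3-1) / fact (t3-1)))"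
  unfolding bracket_def bibracket_def S3_def
  by (simp add: bb_index3' split_def numeral_3_eq_3 mult.assoc)

lemma bibracket2: "bibracket [s1,s2] [r1,r2] = S2 (\<lambda>u1 u2 v1 v2.
   (of_nat u1 ^ r1 / fact r1 * (of_nat v1 ^ (s1-1) / fact (s1-1))) * (of_nat u2 ^ r2 / fact r2 * (of_nat v2 ^ (s2-1) / fact (s2-1))))"
  unfolding bibracket_def S2_def
  by (simp add: bb_index2' split_def numeral_2_eq_2)

section \<open>Fil closure\<close>

lemma FilI: "finite T \<Longrightarrow> (\<forall>ts\<in>T. 1 \<le> length ts \<and> length ts \<le> min k l \<and> (\<forall>t\<in>set ts. 1 \<le> t) \<and> sum_list ts \<le> k) \<Longrightarrow>
   f = fps_const c0 + (\<Sum>ts\<in>T. fps_const (a ts) * bracket ts) \<Longrightarrow> f \<in> Fil_WL k l"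
  unfolding Fil_WL_def by (rule CollectI, rule exI, rule exI, rule exI, intro conjI)

lemma swap4: "(a::'a::comm_monoid_add) + b + (c + d) = (a + c) + (b + d)"
  by (simp add: ac_simps)

lemma Fil_add:
  assumes "f \<in> Fil_WL k l" "g \<in> Fil_WL k l" shows "f + g \<in> Fil_WL k l"
proof -
  from assms(1) obtain c0 T a where T: "finite T" "\<forall>ts\<in>T. 1 \<le> length ts \<and> length ts \<le> min k l \<and> (\<forall>t\<in>set ts. 1 \<le> t) \<and> sum_list ts \<le> k"
    and f: "f = fps_const c0 + (\<Sum>ts\<in>T. fps_const (a ts) * bracket ts)" unfolding Fil_WL_def by blast
  from assms(2) obtain c0' T' a' where T': "finite T'" "\<forall>ts\<in>T'. 1 \<le> length ts \<and> length ts \<le> min k l \<and> (\<forall>t\<in>set ts. 1 \<le> t) \<and> sum_list ts \<le> k"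
    and g: "g = fps_const c0' + (\<Sum>ts\<in>T'. fps_const (a' ts) * bracket ts)" unfolding Fil_WL_def by blast
  define b where "b ts = (if ts \<in> T then a ts else 0) + (if ts \<in> T' then a' ts else 0)" for ts
  have e1: "(\<Sum>ts\<in>T \<union> T'. fps_const (if ts \<in> T then a ts else 0) * bracket ts) = (\<Sum>ts\<in>T. fps_const (a ts) * bracket ts)"
    by (rule sum.mono_neutral_cong_right) (use T(1) T'(1) in auto)
  have e2: "(\<Sum>ts\<in>T \<union> T'. fps_const (if ts \<in> T' then a' ts else 0) * bracket ts) = (\<Sum>ts\<in>T'. fps_const (a' ts) * bracket ts)"
    by (rule sum.mono_neutral_cong_right) (use T(1) T'(1) in auto)
  have e3: "(\<Sum>ts\<in>T \<union> T'. fps_const (b ts) * bracket ts) = (\<Sum>ts\<in>T \<union> T'. fps_const (if ts \<in> T then a ts else 0) * bracket ts) + (\<Sum>ts\<in>T \<union> T'. fps_const (if ts \<in> T' then a' ts else 0) * bracket ts)"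
    unfolding b_def fps_const_add[symmetric] distrib_right sum.distrib ..
  have "f + g = (fps_const c0 + fps_const c0') + ((\<Sum>ts\<in>T. fps_const (a ts) * bracket ts) + (\<Sum>ts\<in>T'. fps_const (a' ts) * bracket ts))"
    unfolding f g by (rule swap4)
  also have "\<dots> = fps_const (c0 + c0') + (\<Sum>ts\<in>T \<union> T'. fps_const (b ts) * bracket ts)"
  proof -
    have "(\<Sum>ts\<in>T \<union> T'. fps_const (b ts) * bracket ts) = (\<Sum>ts\<in>T. fps_const (a ts) * bracket ts) + (\<Sum>ts\<in>T'. fps_const (a' ts) * bracket ts)"
      by (simp only: e3 e1 e2)
    then show ?thesis unfolding fps_const_add by (rule arg_cong[where f="\<lambda>x. fps_const (c0 + c0') + x", OF sym])
  qed
  finally have "f + g = fps_const (c0 + c0') + (\<Sum>ts\<in>T \<union> T'. fps_const (b ts) * bracket ts)" .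
  moreover have "finite (T \<union> T')" using T(1) T'(1) by simp
  moreover have "\<forall>ts\<in>T \<union> T'. 1 \<le> length ts \<and> length ts \<le> min k l \<and> (\<forall>t\<in>set ts. 1 \<le> t) \<and> sum_list ts \<le> k"
    using T(2) T'(2) by (simp only: ball_Un)
  ultimately show ?thesis by (intro FilI)
qed

lemma Fil_smult:
  assumes "f \<in> Fil_WL k l" shows "fps_const c * f \<in> Fil_WL k l"
proof -
  from assms obtain c0 T a where T: "finite T" "\<forall>ts\<in>T. 1 \<le> length ts \<and> length ts \<le> min k l \<and> (\<forall>t\<in>set ts. 1 \<le> t) \<and> sum_list ts \<le> k"
    and f: "f = fps_const c0 + (\<Sum>ts\<in>T. fps_const (a ts) * bracket ts)" unfolding Fil_WL_def by blast
  have "fps_const c * f = fps_const (c*c0) + (\<Sum>ts\<in>T. fps_const (c * a ts) * bracket ts)"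
    unfolding f distrib_left sum_distrib_left mult.assoc[symmetric] fps_const_mult ..
  then show ?thesis by (rule FilI[OF T(1) T(2)])
qed

lemma Fil_const: "fps_const c \<in> Fil_WL k l"
  by (rule FilI[of "{}"]) auto

lemma Fil_zero: "0 \<in> Fil_WL k l"
  using Fil_const[of 0] by simp

lemma Fil_bracket:
  assumes "1 \<le> length ts" "length ts \<le> min k l" "\<forall>t\<in>set ts. 1 \<le> t" "sum_list ts \<le> k"
  shows "bracket ts \<in> Fil_WL k l"
  by (rule FilI[of "{ts}" k l "bracket ts" 0 "\<lambda>_. 1"]) (use assms in auto)

lemma Fil_mono: assumes "f \<in> Fil_WL k l" "k \<le> k'" "l \<le> l'" shows "f \<in> Fil_WL k' l'"
proof -
  from assms(1) obtain c0 T a where T: "finite T" "\<forall>ts\<in>T. 1 \<le> length ts \<and> length ts \<le> min k l \<and> (\<forall>t\<in>set ts. 1 \<le> t) \<and> sum_list ts \<le> k"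
    and f: "f = fps_const c0 + (\<Sum>ts\<in>T. fps_const (a ts) * bracket ts)" unfolding Fil_WL_def by blast
  have "\<forall>ts\<in>T. 1 \<le> length ts \<and> length ts \<le> min k' l' \<and> (\<forall>t\<in>set ts. 1 \<le> t) \<and> sum_list ts \<le> k'"
  proof
    fix ts assume "ts \<in> T"
    then have h0: "1 \<le> length ts \<and> length ts \<le> min k l \<and> (\<forall>t\<in>set ts. 1 \<le> t) \<and> sum_list ts \<le> k"
      by (rule bspec[OF T(2)])
    then have h: "1 \<le> length ts" "length ts \<le> k" "length ts \<le> l" "\<forall>t\<in>set ts. 1 \<le> t" "sum_list ts \<le> k"
      by simp_all
    then show "1 \<le> length ts \<and> length ts \<le> min k' l' \<and> (\<forall>t\<in>set ts. 1 \<le> t) \<and> sum_list ts \<le> k'"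
      using assms(2,3) by simp
  qed
  then show ?thesis by (rule FilI[OF T(1) _ f])
qed

lemma Fil_neg: assumes "f \<in> Fil_WL k l" shows "- f \<in> Fil_WL k l"
proof -
  have "fps_const (-1) * f = - f" by (simp add: fps_eq_iff)
  then show ?thesis using Fil_smult[OF assms, of "-1"] by (simp only:)
qed

lemma Fil_diff: "f \<in> Fil_WL k l \<Longrightarrow> g \<in> Fil_WL k l \<Longrightarrow> f - g \<in> Fil_WL k l"
  using Fil_add[OF _ Fil_neg] by (simp only: diff_conv_add_uminus)



inductive_set VP :: "nat \<Rightarrow> nat \<Rightarrow> (nat list \<Rightarrow> rat) set" for m :: nat and d :: nat where
  VP_mon: "(\<Sum>j<m. e j) \<le> d \<Longrightarrow> (\<lambda>vs. \<Prod>j<m. of_nat (vs!j) ^ e j) \<in> VP m d"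
| VP_add: "P \<in> VP m d \<Longrightarrow> Q \<in> VP m d \<Longrightarrow> (\<lambda>vs. P vs + Q vs) \<in> VP m d"
| VP_smult: "P \<in> VP m d \<Longrightarrow> (\<lambda>vs. c * P vs) \<in> VP m d"

lemma VP_mono: "P \<in> VP m d \<Longrightarrow> d \<le> d' \<Longrightarrow> P \<in> VP m d'"
proof (induct rule: VP.induct)
  case (VP_mon e) then show ?case by (intro VP.VP_mon) simp
next
  case (VP_add P Q) then show ?case by (intro VP.VP_add) simp_all
next
  case (VP_smult P c) then show ?case by (intro VP.VP_smult) simp_all
qed

lemma VP_const: "(\<lambda>_. c) \<in> VP m d"
proof -
  have "(\<lambda>vs. c * (\<Prod>j<m. of_nat (vs!j) ^ (\<lambda>_. 0::nat) j)) \<in> VP m d"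
    by (intro VP_smult VP_mon) simp
  then show ?thesis by simp
qed

lemma VP_mon_mult:
  assumes "Q \<in> VP m d2" "(\<Sum>j<m. e j) \<le> d1"
  shows "(\<lambda>vs. (\<Prod>j<m. of_nat (vs!j) ^ e j) * Q vs) \<in> VP m (d1+d2)"
  using assms(1)
proof (induct rule: VP.induct)
  case (VP_mon e')
  have "(\<lambda>vs. \<Prod>j<m. of_nat (vs!j) ^ (\<lambda>j. e j + e' j) j) \<in> VP m (d1+d2)"
    by (rule VP.VP_mon) (use VP_mon assms(2) in \<open>simp add: sum.distrib\<close>)
  then show ?case by (simp add: power_add prod.distrib)
next
  case (VP_add P Q)
  then have "(\<lambda>vs. (\<Prod>j<m. of_nat (vs!j) ^ e j) * P vs + (\<Prod>j<m. of_nat (vs!j) ^ e j) * Q vs) \<in> VP m (d1+d2)"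
    by (intro VP.VP_add)
  then show ?case by (simp add: distrib_left)
next
  case (VP_smult P c)
  then have "(\<lambda>vs. c * ((\<Prod>j<m. of_nat (vs!j) ^ e j) * P vs)) \<in> VP m (d1+d2)"
    by (intro VP.VP_smult)
  then show ?case by (simp add: mult.left_commute)
qed

lemma VP_mult:
  assumes "P \<in> VP m d1" "Q \<in> VP m d2"
  shows "(\<lambda>vs. P vs * Q vs) \<in> VP m (d1+d2)"
  using assms(1)
proof (induct rule: VP.induct)
  case (VP_mon e) then show ?case using VP_mon_mult[OF assms(2)] by simp
next
  case (VP_add P1 P2)
  then have "(\<lambda>vs. P1 vs * Q vs + P2 vs * Q vs) \<in> VP m (d1+d2)"
    by (intro VP.VP_add)
  then show ?case by (simp add: distrib_right)
next
  case (VP_smult P c)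
  then have "(\<lambda>vs. c * (P vs * Q vs)) \<in> VP m (d1+d2)"
    by (intro VP.VP_smult)
  then show ?case by (simp add: mult.assoc)
qed

lemma VP_var: assumes "j < m" shows "(\<lambda>vs. of_nat (vs!j)) \<in> VP m 1"
proof -
  have "(\<lambda>vs. \<Prod>i<m. of_nat (vs!i) ^ (\<lambda>i. if i = j then 1 else 0::nat) i) \<in> VP m 1"
    by (rule VP_mon) (use assms in simp)
  moreover have "(\<lambda>vs. \<Prod>i<m. (of_nat (vs!i)::rat) ^ (\<lambda>i. if i = j then 1 else 0::nat) i) = (\<lambda>vs. of_nat (vs!j))"
  proof
    fix vs :: "nat list"
    have "(\<Prod>i<m. (of_nat (vs!i)::rat) ^ (\<lambda>i. if i = j then 1 else 0::nat) i) = (\<Prod>i<m. if i = j then of_nat (vs!i) else 1)"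
      by (rule prod.cong) auto
    also have "\<dots> = of_nat (vs!j)" using assms by (simp add: prod.delta)
    finally show "(\<Prod>i<m. (of_nat (vs!i)::rat) ^ (\<lambda>i. if i = j then 1 else 0::nat) i) = of_nat (vs!j)" .
  qed
  ultimately show ?thesis by simp
qed

lemma VP_pow: "P \<in> VP m d \<Longrightarrow> (\<lambda>vs. P vs ^ n) \<in> VP m (n*d)"
proof (induct n)
  case 0 then show ?case using VP_const[of 1] by simp
next
  case (Suc n) then show ?case using VP_mult[of P m d "\<lambda>vs. P vs ^ n" "n*d"] by simp
qed

lemma VP_sum: "finite I \<Longrightarrow> (\<And>i. i \<in> I \<Longrightarrow> f i \<in> VP m d) \<Longrightarrow> (\<lambda>vs. \<Sum>i\<in>I. f i vs) \<in> VP m d"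
proof (induct rule: finite_induct)
  case empty then show ?case using VP_const[of 0] by simp
next
  case (insert x F)
  then have "(\<lambda>vs. f x vs + (\<Sum>i\<in>F. f i vs)) \<in> VP m d" by (intro VP_add) auto
  then show ?case using insert by simp
qed

lemma VP_diff: "P \<in> VP m d \<Longrightarrow> Q \<in> VP m d \<Longrightarrow> (\<lambda>vs. P vs - Q vs) \<in> VP m d"
proof -
  assume "P \<in> VP m d" "Q \<in> VP m d"
  then have "(\<lambda>vs. P vs + (-1) * Q vs) \<in> VP m d" by (intro VP_add VP_smult)
  then show ?thesis by simp
qed

lemma VP_mult': "P \<in> VP m d1 \<Longrightarrow> Q \<in> VP m d2 \<Longrightarrow> d1 + d2 \<le> d \<Longrightarrow> (\<lambda>vs. P vs * Q vs) \<in> VP m d"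
  using VP_mult VP_mono by blast

definition UP :: "nat \<Rightarrow> (nat \<Rightarrow> rat) set" where
  "UP d = {f. \<forall>m j. j < m \<longrightarrow> (\<lambda>vs. f (vs!j)) \<in> VP m d}"

lemma UP_VP: "f \<in> UP d \<Longrightarrow> j < m \<Longrightarrow> (\<lambda>vs. f (vs!j)) \<in> VP m d"
  unfolding UP_def by blast
lemma UP_var: "(\<lambda>n. of_nat n) \<in> UP 1"
  unfolding UP_def using VP_var by blast
lemma UP_const: "(\<lambda>_. c) \<in> UP d"
  unfolding UP_def using VP_const by blast
lemma UP_mono: "f \<in> UP d \<Longrightarrow> d \<le> d' \<Longrightarrow> f \<in> UP d'"
  unfolding UP_def using VP_mono by blast
lemma UP_add: "f \<in> UP d \<Longrightarrow> g \<in> UP d \<Longrightarrow> (\<lambda>n. f n + g n) \<in> UP d"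
  unfolding UP_def using VP_add by blast
lemma UP_diff: "f \<in> UP d \<Longrightarrow> g \<in> UP d \<Longrightarrow> (\<lambda>n. f n - g n) \<in> UP d"
  unfolding UP_def using VP_diff by blast
lemma UP_smult: "f \<in> UP d \<Longrightarrow> (\<lambda>n. c * f n) \<in> UP d"
  unfolding UP_def using VP_smult by blast
lemma UP_mult: "f \<in> UP d1 \<Longrightarrow> g \<in> UP d2 \<Longrightarrow> (\<lambda>n. f n * g n) \<in> UP (d1+d2)"
  unfolding UP_def using VP_mult by blast
lemma UP_pow: "f \<in> UP d \<Longrightarrow> (\<lambda>n. f n ^ k) \<in> UP (k*d)"
  unfolding UP_def using VP_pow by blast
lemma UP_sum: "finite I \<Longrightarrow> (\<And>i. i \<in> I \<Longrightarrow> f i \<in> UP d) \<Longrightarrow> (\<lambda>n. \<Sum>i\<in>I. f i n) \<in> UP d"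
  unfolding UP_def using VP_sum[of I "\<lambda>i vs. f i (vs ! _)"] by blast



lemma faul_identity:
  "(of_nat n :: rat) ^ Suc a = (\<Sum>j\<le>a. of_nat (Suc a choose j) * (\<Sum>k<n. of_nat k ^ j))"
proof -
  have "(of_nat n :: rat) ^ Suc a = (\<Sum>k<n. of_nat (Suc k) ^ Suc a - of_nat k ^ Suc a)"
    using sum_lessThan_telescope[of "\<lambda>k. (of_nat k :: rat) ^ Suc a" n] by simp
  also have "\<dots> = (\<Sum>k<n. \<Sum>j\<le>a. of_nat (Suc a choose j) * of_nat k ^ j)"
  proof (rule sum.cong[OF refl])
    fix k
    have "(of_nat (Suc k) :: rat) ^ Suc a = (of_nat k + 1) ^ Suc a" by (simp add: add.commute)
    also have "\<dots> = (\<Sum>j\<le>Suc a. of_nat (Suc a choose j) * of_nat k ^ j * 1 ^ (Suc a - j))"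
      by (rule binomial_ring)
    also have "\<dots> = (\<Sum>j\<le>a. of_nat (Suc a choose j) * of_nat k ^ j) + of_nat k ^ Suc a"
      by (simp add: sum.atMost_Suc)
    finally show "(of_nat (Suc k) :: rat) ^ Suc a - of_nat k ^ Suc a = (\<Sum>j\<le>a. of_nat (Suc a choose j) * of_nat k ^ j)"
      by simp
  qed
  also have "\<dots> = (\<Sum>j\<le>a. of_nat (Suc a choose j) * (\<Sum>k<n. of_nat k ^ j))"
    by (subst sum.swap) (simp add: sum_distrib_left)
  finally show ?thesis .
qed

lemma faulhaber: "(\<lambda>n. \<Sum>k<n. (of_nat k :: rat) ^ a) \<in> UP (Suc a)"
proof (induct a rule: less_induct)
  case (less a)
  define F where "F j n = (\<Sum>k<n. (of_nat k :: rat) ^ j)" for j n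
  have eq: "F a n = (1 / of_nat (Suc a)) * ((of_nat n) ^ Suc a - (\<Sum>j<a. of_nat (Suc a choose j) * F j n))" for n
  proof -
    have "(of_nat n :: rat) ^ Suc a = (\<Sum>j<a. of_nat (Suc a choose j) * F j n) + of_nat (Suc a) * F a n"
      unfolding faul_identity F_def by (simp add: lessThan_Suc_atMost[symmetric] sum.lessThan_Suc)
    then show ?thesis by (simp add: field_simps)
  qed
  have "(\<lambda>n. (1 / of_nat (Suc a)) * ((of_nat n) ^ Suc a - (\<Sum>j<a. of_nat (Suc a choose j) * F j n))) \<in> UP (Suc a)"
  proof (intro UP_smult UP_diff UP_sum)
    show "(\<lambda>n. (of_nat n :: rat) ^ Suc a) \<in> UP (Suc a)" using UP_pow[OF UP_var, of "Suc a"] by simp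
    fix j assume "j \<in> {..<a}"
    then have "F j \<in> UP (Suc a)" using less[of j] unfolding F_def by (auto intro: UP_mono)
    then show "F j \<in> UP (Suc a)" .
  qed simp
  then show ?case using eq unfolding F_def by simp
qed

lemma faul1: "\<exists>f\<in>UP (Suc a). \<forall>n>0. (\<Sum>k\<in>{1..<n}. (of_nat k :: rat) ^ a) = f n"
proof (intro bexI allI impI)
  show "(\<lambda>n. (\<Sum>k<n. (of_nat k :: rat) ^ a) - 0 ^ a) \<in> UP (Suc a)"
    by (intro UP_diff faulhaber UP_const)
  fix n :: nat assume "0 < n"
  then have "{..<n} = insert 0 {1..<n}" by auto
  then show "(\<Sum>k\<in>{1..<n}. (of_nat k :: rat) ^ a) = (\<Sum>k<n. (of_nat k :: rat) ^ a) - 0 ^ a"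
    by simp
qed

lemma faul2: "\<exists>f\<in>UP (a+2). \<forall>n>0. (\<Sum>k\<in>{1..<n}. (of_nat k :: rat) ^ a * of_nat (n - k)) = f n"
proof -
  obtain f where f: "f \<in> UP (Suc a)" "\<forall>n>0. (\<Sum>k\<in>{1..<n}. (of_nat k :: rat) ^ a) = f n" using faul1 by blast
  obtain g where g: "g \<in> UP (Suc (Suc a))" "\<forall>n>0. (\<Sum>k\<in>{1..<n}. (of_nat k :: rat) ^ Suc a) = g n" using faul1 by blast
  show ?thesis
  proof (intro bexI allI impI)
    show "(\<lambda>n. of_nat n * f n - g n) \<in> UP (a+2)"
      using UP_mult[OF UP_var f(1)] g(1) by (intro UP_diff) simp_all
    fix n :: nat assume n: "0 < n"
    have "(\<Sum>k\<in>{1..<n}. (of_nat k :: rat) ^ a * of_nat (n - k)) = (\<Sum>k\<in>{1..<n}. of_nat n * of_nat k ^ a - of_nat k ^ Suc a)"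
      by (rule sum.cong) (auto simp: of_nat_diff algebra_simps)
    also have "\<dots> = of_nat n * (\<Sum>k\<in>{1..<n}. (of_nat k :: rat) ^ a) - (\<Sum>k\<in>{1..<n}. (of_nat k :: rat) ^ Suc a)"
      by (simp add: sum_subtractf sum_distrib_left)
    also have "\<dots> = of_nat n * f n - g n" using f(2) g(2) n by simp
    finally show "(\<Sum>k\<in>{1..<n}. (of_nat k :: rat) ^ a * of_nat (n - k)) = of_nat n * f n - g n" .
  qed
qed

lemma sum_rev1: "(\<Sum>k\<in>{1..<n::nat}. f (n - k)) = (\<Sum>k\<in>{1..<n}. (f k :: rat))"
  by (rule sum.reindex_bij_witness[where i="\<lambda>k. n - k" and j="\<lambda>k. n - k"]) auto



lemma S1_VP: "P \<in> VP 1 d \<Longrightarrow> 1 \<le> l \<Longrightarrow> Suc d \<le> k \<Longrightarrow> S1 (\<lambda>u v. P [v]) \<in> Fil_WL k l"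
proof (induct rule: VP.induct)
  case (VP_mon e)
  have "S1 (\<lambda>u v. \<Prod>j<1. of_nat ([v]!j) ^ e j) = fps_const (fact (e 0)) * bracket [Suc (e 0)]"
    by (simp add: bracket1 S1_cmult[symmetric])
  moreover have "bracket [Suc (e 0)] \<in> Fil_WL k l"
    by (rule Fil_bracket) (use VP_mon in auto)
  ultimately show ?case by (simp add: Fil_smult)
next
  case (VP_add P Q) then show ?case by (simp add: S1_add Fil_add)
next
  case (VP_smult P c) then show ?case by (simp add: S1_cmult Fil_smult)
qed

lemma S2_VP: "P \<in> VP 2 d \<Longrightarrow> 2 \<le> l \<Longrightarrow> d + 2 \<le> k \<Longrightarrow> S2 (\<lambda>u1 u2 v1 v2. P [v1,v2]) \<in> Fil_WL k l"
proof (induct rule: VP.induct)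
  case (VP_mon e)
  have "S2 (\<lambda>u1 u2 v1 v2. \<Prod>j<2. of_nat ([v1,v2]!j) ^ e j) = fps_const (fact (e 0) * fact (e 1)) * bracket [Suc (e 0), Suc (e 1)]"
    by (simp add: bracket2 S2_cmult[symmetric] numeral_2_eq_2)
  moreover have "bracket [Suc (e 0), Suc (e 1)] \<in> Fil_WL k l"
    by (rule Fil_bracket) (use VP_mon in \<open>auto simp: numeral_2_eq_2\<close>)
  ultimately show ?case by (simp add: Fil_smult)
next
  case (VP_add P Q) then show ?case by (simp add: S2_add Fil_add)
next
  case (VP_smult P c) then show ?case by (simp add: S2_cmult Fil_smult)
qed

lemma S3_VP: "P \<in> VP 3 d \<Longrightarrow> 3 \<le> l \<Longrightarrow> d + 3 \<le> k \<Longrightarrow> S3 (\<lambda>u1 u2 u3 v1 v2 v3. P [v1,v2,v3]) \<in> Fil_WL k l"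
proof (induct rule: VP.induct)
  case (VP_mon e)
  have "S3 (\<lambda>u1 u2 u3 v1 v2 v3. \<Prod>j<3. of_nat ([v1,v2,v3]!j) ^ e j) = fps_const (fact (e 0) * fact (e 1) * fact (e 2)) * bracket [Suc (e 0), Suc (e 1), Suc (e 2)]"
    by (simp add: bracket3 S3_cmult[symmetric] numeral_3_eq_3 numeral_2_eq_2)
  moreover have "bracket [Suc (e 0), Suc (e 1), Suc (e 2)] \<in> Fil_WL k l"
    by (rule Fil_bracket) (use VP_mon in \<open>auto simp: numeral_3_eq_3 numeral_2_eq_2\<close>)
  ultimately show ?case by (simp add: Fil_smult)
next
  case (VP_add P Q) then show ?case by (simp add: S3_add Fil_add)
next
  case (VP_smult P c) then show ?case by (simp add: S3_cmult Fil_smult)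
qed

lemma S1_VP': "P \<in> VP 1 d \<Longrightarrow> 1 \<le> l \<Longrightarrow> Suc d \<le> k \<Longrightarrow> (\<And>u v. 0<u \<Longrightarrow> 0<v \<Longrightarrow> W u v = P [v]) \<Longrightarrow> S1 W \<in> Fil_WL k l"
proof -
  assume a: "P \<in> VP 1 d" "1 \<le> l" "Suc d \<le> k" and w: "\<And>u v. 0<u \<Longrightarrow> 0<v \<Longrightarrow> W u v = P [v]"
  have "S1 W = S1 (\<lambda>u v. P [v])" by (rule S1_cong) (rule w)
  then show ?thesis using S1_VP[OF a] by simp
qed

lemma S2_VP': "P \<in> VP 2 d \<Longrightarrow> 2 \<le> l \<Longrightarrow> d + 2 \<le> k \<Longrightarrow>
  (\<And>u1 u2 v1 v2. u2<u1 \<Longrightarrow> 0<u2 \<Longrightarrow> 0<v1 \<Longrightarrow> 0<v2 \<Longrightarrow> W u1 u2 v1 v2 = P [v1,v2]) \<Longrightarrow> S2 W \<in> Fil_WL k l"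
proof -
  assume a: "P \<in> VP 2 d" "2 \<le> l" "d + 2 \<le> k" and w: "\<And>u1 u2 v1 v2. u2<u1 \<Longrightarrow> 0<u2 \<Longrightarrow> 0<v1 \<Longrightarrow> 0<v2 \<Longrightarrow> W u1 u2 v1 v2 = P [v1,v2]"
  have "S2 W = S2 (\<lambda>u1 u2 v1 v2. P [v1,v2])" by (rule S2_cong) (rule w)
  then show ?thesis using S2_VP[OF a] by simp
qed

lemma S3_VP': "P \<in> VP 3 d \<Longrightarrow> 3 \<le> l \<Longrightarrow> d + 3 \<le> k \<Longrightarrow>
  (\<And>u1 u2 u3 v1 v2 v3. u2<u1 \<Longrightarrow> u3<u2 \<Longrightarrow> 0<u3 \<Longrightarrow> 0<v1 \<Longrightarrow> 0<v2 \<Longrightarrow> 0<v3 \<Longrightarrow> W u1 u2 u3 v1 v2 v3 = P [v1,v2,v3]) \<Longrightarrow> S3 W \<in> Fil_WL k l"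
proof -
  assume a: "P \<in> VP 3 d" "3 \<le> l" "d + 3 \<le> k" and w: "\<And>u1 u2 u3 v1 v2 v3. u2<u1 \<Longrightarrow> u3<u2 \<Longrightarrow> 0<u3 \<Longrightarrow> 0<v1 \<Longrightarrow> 0<v2 \<Longrightarrow> 0<v3 \<Longrightarrow> W u1 u2 u3 v1 v2 v3 = P [v1,v2,v3]"
  have "S3 W = S3 (\<lambda>u1 u2 u3 v1 v2 v3. P [v1,v2,v3])" by (rule S3_cong) (rule w)
  then show ?thesis using S3_VP[OF a] by simp
qed




lemma S1_nth: "S1 W $ N = (\<Sum>(u,v)\<in>B1 N. W u v)" by (simp add: S1_def)
lemma S2_nth: "S2 W $ N = (\<Sum>(u1,u2,v1,v2)\<in>B2 N. W u1 u2 v1 v2)" by (simp add: S2_def)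
lemma S3_nth: "S3 W $ N = (\<Sum>(u1,u2,u3,v1,v2,v3)\<in>B3 N. W u1 u2 u3 v1 v2 v3)" by (simp add: S3_def)

lemma conv_sum:
  assumes fx: "\<And>i. finite {x. P x \<and> wx x = (i::nat)}" and fy: "\<And>i. finite {y. Q y \<and> wy y = i}"
  shows "(\<Sum>i=0..N. (\<Sum>x\<in>{x. P x \<and> wx x = i}. f x) * (\<Sum>y\<in>{y. Q y \<and> wy y = N - i}. g y))
       = (\<Sum>(x,y)\<in>{(x,y). P x \<and> Q y \<and> wx x + wy y = N}. f x * g y :: 'c::comm_semiring_1)"
proof -
  define X where "X i = {x. P x \<and> wx x = i}" for i
  define Y where "Y i = {y. Q y \<and> wy y = i}" for i
  have "(\<Sum>i=0..N. (\<Sum>x\<in>X i. f x) * (\<Sum>y\<in>Y (N - i). g y)) = (\<Sum>i=0..N. \<Sum>(x,y)\<in>X i \<times> Y (N-i). f x * g y)"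
    by (simp add: sum_product sum.cartesian_product)
  also have "\<dots> = (\<Sum>(x,y)\<in>(\<Union>i\<in>{0..N}. X i \<times> Y (N-i)). f x * g y)"
    by (rule sum.UNION_disjoint[symmetric]) (auto simp: X_def Y_def fx fy)
  also have "(\<Union>i\<in>{0..N}. X i \<times> Y (N-i)) = {(x,y). P x \<and> Q y \<and> wx x + wy y = N}"
    by (auto simp: X_def Y_def)
  finally show ?thesis unfolding X_def Y_def .
qed

lemma B1_alt: "B1 N = {x. (case x of (u,v) \<Rightarrow> 0<u \<and> 0<v) \<and> (case x of (u,v) \<Rightarrow> u*v) = N}"
  by (auto simp: B1_def)
lemma B2_alt: "B2 N = {x. (case x of (u1,u2,v1,v2) \<Rightarrow> u2<u1 \<and> 0<u2 \<and> 0<v1 \<and> 0<v2) \<and> (case x of (u1,u2,v1,v2) \<Rightarrow> u1*v1+u2*v2) = N}"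
  by (auto simp: B2_def)

lemma split_sum: "finite C \<Longrightarrow> sum f C = sum f {z\<in>C. P z} + sum f {z\<in>C. \<not> P z}"
  by (subst sum.union_disjoint[symmetric]) (auto intro: sum.cong)

lemma mult_split: "k \<le> w \<Longrightarrow> u*k + u*(w-k) = u*(w::nat)"
  by (simp add: distrib_left[symmetric])

definition C11 :: "nat \<Rightarrow> ((nat \<times> nat) \<times> (nat \<times> nat)) set" where
  "C11 N = {(x,y). (case x of (u,v) \<Rightarrow> 0<u \<and> 0<v) \<and> (case y of (u,v) \<Rightarrow> 0<u \<and> 0<v) \<and>
     (case x of (u,v) \<Rightarrow> u*v) + (case y of (u,v) \<Rightarrow> u*v) = N}"

lemma finite_C11: "finite (C11 N)"
proof -
  have "C11 N \<subseteq> (\<Union>i\<in>{0..N}. B1 i \<times> B1 (N-i))"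
    by (auto simp: C11_def B1_def)
  then show ?thesis by (rule finite_subset) (auto simp: finite_B1)
qed

lemma stuffle11:
  "S1 A * S1 B = S2 (\<lambda>u1 u2 v1 v2. A u1 v1 * B u2 v2) + S2 (\<lambda>u1 u2 v1 v2. A u2 v2 * B u1 v1)
     + S1 (\<lambda>u v. \<Sum>k\<in>{1..<v}. A u k * B u (v-k))"
proof (rule fps_ext)
  fix N
  define F where "F = (\<lambda>(x::nat\<times>nat, y::nat\<times>nat). (case x of (u,v) \<Rightarrow> A u v) * (case y of (u,v) \<Rightarrow> B u v))"
  have "(S1 A * S1 B) $ N = sum F (C11 N)"
    unfolding fps_mult_nth S1_nth B1_alt C11_def F_def
    by (rule conv_sum) (auto simp: B1_alt[symmetric] finite_B1)
  also have "\<dots> = sum F {z\<in>C11 N. fst (snd z) < fst (fst z)} +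
      (sum F {z\<in>{z\<in>C11 N. \<not>(fst (snd z) < fst (fst z))}. fst (fst z) < fst (snd z)}
     + sum F {z\<in>{z\<in>C11 N. \<not>(fst (snd z) < fst (fst z))}. \<not> fst (fst z) < fst (snd z)})"
  proof -
    have "sum F (C11 N) = sum F {z\<in>C11 N. fst (snd z) < fst (fst z)} + sum F {z\<in>C11 N. \<not>(fst (snd z) < fst (fst z))}"
      by (rule split_sum[OF finite_C11])
    moreover have "sum F {z\<in>C11 N. \<not>(fst (snd z) < fst (fst z))} = sum F {z\<in>{z\<in>C11 N. \<not>(fst (snd z) < fst (fst z))}. fst (fst z) < fst (snd z)}
     + sum F {z\<in>{z\<in>C11 N. \<not>(fst (snd z) < fst (fst z))}. \<not> fst (fst z) < fst (snd z)}"
      by (rule split_sum) (simp add: finite_C11)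
    ultimately show ?thesis by simp
  qed
  also have "sum F {z\<in>C11 N. fst (snd z) < fst (fst z)} = S2 (\<lambda>u1 u2 v1 v2. A u1 v1 * B u2 v2) $ N"
    unfolding S2_nth
    by (rule sum.reindex_bij_witness[where i="\<lambda>(u1,u2,v1,v2). ((u1,v1),(u2,v2))" and j="\<lambda>((u,v),(u',v')). (u,u',v,v')"])
       (auto simp: C11_def B2_def F_def)
  also have "sum F {z\<in>{z\<in>C11 N. \<not>(fst (snd z) < fst (fst z))}. fst (fst z) < fst (snd z)} = S2 (\<lambda>u1 u2 v1 v2. A u2 v2 * B u1 v1) $ N"
    unfolding S2_nth
    by (rule sum.reindex_bij_witness[where i="\<lambda>(u1,u2,v1,v2). ((u2,v2),(u1,v1))" and j="\<lambda>((u,v),(u',v')). (u',u,v',v)"])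
       (auto simp: C11_def B2_def F_def)
  also have "sum F {z\<in>{z\<in>C11 N. \<not>(fst (snd z) < fst (fst z))}. \<not> fst (fst z) < fst (snd z)}
     = (\<Sum>(x,k)\<in>Sigma (B1 N) (\<lambda>(u,w). {1..<w}). A (fst x) k * B (fst x) (snd x - k))"
    by (rule sum.reindex_bij_witness[where i="\<lambda>((u,w),k). ((u,k),(u,w-k))" and j="\<lambda>((u,v),(u',v')). ((u,v+v'),v)"])
       (auto simp: C11_def B1_def F_def distrib_left mult_split)
  also have "\<dots> = S1 (\<lambda>u v. \<Sum>k\<in>{1..<v}. A u k * B u (v-k)) $ N"
    unfolding S1_nth by (subst sum.Sigma[symmetric]) (auto simp: finite_B1 split_def)
  finally show "(S1 A * S1 B) $ N = (S2 (\<lambda>u1 u2 v1 v2. A u1 v1 * B u2 v2) + S2 (\<lambda>u1 u2 v1 v2. A u2 v2 * B u1 v1)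
     + S1 (\<lambda>u v. \<Sum>k\<in>{1..<v}. A u k * B u (v-k))) $ N" by simp
qed




definition C12 :: "nat \<Rightarrow> ((nat \<times> nat) \<times> (nat \<times> nat \<times> nat \<times> nat)) set" where
  "C12 N = {(x,y). (case x of (u,v) \<Rightarrow> 0<u \<and> 0<v) \<and> (case y of (u1,u2,v1,v2) \<Rightarrow> u2<u1 \<and> 0<u2 \<and> 0<v1 \<and> 0<v2) \<and>
     (case x of (u,v) \<Rightarrow> u*v) + (case y of (u1,u2,v1,v2) \<Rightarrow> u1*v1+u2*v2) = N}"

lemma finite_C12: "finite (C12 N)"
proof -
  have "C12 N \<subseteq> (\<Union>i\<in>{0..N}. B1 i \<times> B2 (N-i))"
    by (auto simp: C12_def B1_def B2_def)
  then show ?thesis by (rule finite_subset) (auto simp: finite_B1 finite_B2)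
qed

lemma stuffle12:
  "S1 A * S2 B = S3 (\<lambda>u1 u2 u3 v1 v2 v3. A u1 v1 * B u2 u3 v2 v3) + S3 (\<lambda>u1 u2 u3 v1 v2 v3. A u2 v2 * B u1 u3 v1 v3)
     + S3 (\<lambda>u1 u2 u3 v1 v2 v3. A u3 v3 * B u1 u2 v1 v2)
     + S2 (\<lambda>u1 u2 v1 v2. \<Sum>k\<in>{1..<v1}. A u1 k * B u1 u2 (v1-k) v2)
     + S2 (\<lambda>u1 u2 v1 v2. \<Sum>k\<in>{1..<v2}. A u2 k * B u1 u2 v1 (v2-k))"
proof (rule fps_ext)
  fix N
  define F where "F = (\<lambda>(x::nat\<times>nat, y::nat\<times>nat\<times>nat\<times>nat). (case x of (u,v) \<Rightarrow> A u v) * (case y of (u1,u2,v1,v2) \<Rightarrow> B u1 u2 v1 v2))"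
  define P1 where "P1 = (\<lambda>z::(nat \<times> nat) \<times> (nat \<times> nat \<times> nat \<times> nat). fst (snd z) < fst (fst z))"
  define P2 where "P2 = (\<lambda>z::(nat \<times> nat) \<times> (nat \<times> nat \<times> nat \<times> nat). fst (snd z) = fst (fst z))"
  define P3 where "P3 = (\<lambda>z::(nat \<times> nat) \<times> (nat \<times> nat \<times> nat \<times> nat). fst (snd (snd z)) < fst (fst z))"
  define P4 where "P4 = (\<lambda>z::(nat \<times> nat) \<times> (nat \<times> nat \<times> nat \<times> nat). fst (snd (snd z)) = fst (fst z))"
  define R1 where "R1 = {z\<in>C12 N. \<not> P1 z}"
  define R2 where "R2 = {z\<in>R1. \<not> P2 z}"
  define R3 where "R3 = {z\<in>R2. \<not> P3 z}"
  have fR: "finite R1" "finite R2" "finite R3" unfolding R1_def R2_def R3_def by (simp_all add: finite_C12)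
  have "(S1 A * S2 B) $ N = sum F (C12 N)"
    unfolding fps_mult_nth S1_nth S2_nth B1_alt B2_alt C12_def F_def
    by (rule conv_sum[OF finite_B1[unfolded B1_alt] finite_B2[unfolded B2_alt]])
  also have "\<dots> = sum F {z\<in>C12 N. P1 z} + (sum F {z\<in>R1. P2 z} + (sum F {z\<in>R2. P3 z} + (sum F {z\<in>R3. P4 z} + sum F {z\<in>R3. \<not> P4 z})))"
  proof -
    have "sum F (C12 N) = sum F {z\<in>C12 N. P1 z} + sum F R1" unfolding R1_def by (rule split_sum[OF finite_C12])
    moreover have "sum F R1 = sum F {z\<in>R1. P2 z} + sum F R2" unfolding R2_def by (rule split_sum[OF fR(1)])
    moreover have "sum F R2 = sum F {z\<in>R2. P3 z} + sum F R3" unfolding R3_def by (rule split_sum[OF fR(2)])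
    moreover have "sum F R3 = sum F {z\<in>R3. P4 z} + sum F {z\<in>R3. \<not> P4 z}" by (rule split_sum[OF fR(3)])
    ultimately show ?thesis by simp
  qed
  also have "sum F {z\<in>C12 N. P1 z} = S3 (\<lambda>u1 u2 u3 v1 v2 v3. A u1 v1 * B u2 u3 v2 v3) $ N"
    unfolding S3_nth
    by (rule sum.reindex_bij_witness[where i="\<lambda>(a1,a2,a3,b1,b2,b3). ((a1,b1),(a2,a3,b2,b3))" and j="\<lambda>((u,v),(u1,u2,v1,v2)). (u,u1,u2,v,v1,v2)"])
       (auto simp: C12_def B3_def F_def P1_def)
  also have "sum F {z\<in>R1. P2 z} = (\<Sum>(x,k)\<in>Sigma (B2 N) (\<lambda>(u1,u2,w1,w2). {1..<w1}). A (fst x) k * B (fst x) (fst (snd x)) (fst (snd (snd x)) - k) (snd (snd (snd x))))"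
    by (rule sum.reindex_bij_witness[where i="\<lambda>((u1,u2,w1,w2),k). ((u1,k),(u1,u2,w1-k,w2))" and j="\<lambda>((u,v),(u1,u2,v1,v2)). ((u1,u2,v+v1,v2),v)"])
       (auto simp: C12_def B2_def F_def P1_def P2_def R1_def distrib_left mult_split)
  also have "\<dots> = S2 (\<lambda>u1 u2 v1 v2. \<Sum>k\<in>{1..<v1}. A u1 k * B u1 u2 (v1-k) v2) $ N"
    unfolding S2_nth by (subst sum.Sigma[symmetric]) (auto simp: finite_B2 split_def)
  also have "sum F {z\<in>R2. P3 z} = S3 (\<lambda>u1 u2 u3 v1 v2 v3. A u2 v2 * B u1 u3 v1 v3) $ N"
    unfolding S3_nth
    by (rule sum.reindex_bij_witness[where i="\<lambda>(a1,a2,a3,b1,b2,b3). ((a2,b2),(a1,a3,b1,b3))" and j="\<lambda>((u,v),(u1,u2,v1,v2)). (u1,u,u2,v1,v,v2)"])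
       (auto simp: C12_def B3_def F_def P1_def P2_def P3_def R1_def R2_def)
  also have "sum F {z\<in>R3. P4 z} = (\<Sum>(x,k)\<in>Sigma (B2 N) (\<lambda>(u1,u2,w1,w2). {1..<w2}). A (fst (snd x)) k * B (fst x) (fst (snd x)) (fst (snd (snd x))) (snd (snd (snd x)) - k))"
    by (rule sum.reindex_bij_witness[where i="\<lambda>((u1,u2,w1,w2),k). ((u2,k),(u1,u2,w1,w2-k))" and j="\<lambda>((u,v),(u1,u2,v1,v2)). ((u1,u2,v1,v+v2),v)"])
       (auto simp: C12_def B2_def F_def P1_def P2_def P3_def P4_def R1_def R2_def R3_def distrib_left mult_split)
  also have "\<dots> = S2 (\<lambda>u1 u2 v1 v2. \<Sum>k\<in>{1..<v2}. A u2 k * B u1 u2 v1 (v2-k)) $ N"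
    unfolding S2_nth by (subst sum.Sigma[symmetric]) (auto simp: finite_B2 split_def)
  also have "sum F {z\<in>R3. \<not> P4 z} = S3 (\<lambda>u1 u2 u3 v1 v2 v3. A u3 v3 * B u1 u2 v1 v2) $ N"
    unfolding S3_nth
    by (rule sum.reindex_bij_witness[where i="\<lambda>(a1,a2,a3,b1,b2,b3). ((a3,b3),(a1,a2,b1,b2))" and j="\<lambda>((u,v),(u1,u2,v1,v2)). (u1,u2,u,v1,v2,v)"])
       (auto simp: C12_def B3_def F_def P1_def P2_def P3_def P4_def R1_def R2_def R3_def)
  finally show "(S1 A * S2 B) $ N = (S3 (\<lambda>u1 u2 u3 v1 v2 v3. A u1 v1 * B u2 u3 v2 v3) + S3 (\<lambda>u1 u2 u3 v1 v2 v3. A u2 v2 * B u1 u3 v1 v3)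
     + S3 (\<lambda>u1 u2 u3 v1 v2 v3. A u3 v3 * B u1 u2 v1 v2)
     + S2 (\<lambda>u1 u2 v1 v2. \<Sum>k\<in>{1..<v1}. A u1 k * B u1 u2 (v1-k) v2)
     + S2 (\<lambda>u1 u2 v1 v2. \<Sum>k\<in>{1..<v2}. A u2 k * B u1 u2 v1 (v2-k))) $ N" by (simp add: algebra_simps)
qed



lemma S1_diff: "S1 (\<lambda>u v. f u v - g u v) = S1 f - S1 g"
  by (simp add: S1_def fps_eq_iff sum_subtractf split_def)
lemma S2_diff: "S2 (\<lambda>u1 u2 v1 v2. f u1 u2 v1 v2 - g u1 u2 v1 v2) = S2 f - S2 g"
  by (simp add: S2_def fps_eq_iff sum_subtractf split_def)

lemma VPv: "j < m \<Longrightarrow> (\<lambda>vs. (of_nat (vs!j)::rat) ^ c) \<in> VP m c"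
  using VP_pow[OF VP_var, of j m c] by simp
lemma VPv2: "i < m \<Longrightarrow> j < m \<Longrightarrow> (\<lambda>vs. (of_nat (vs!i) + (of_nat (vs!j)::rat)) ^ c) \<in> VP m c"
  using VP_pow[OF VP_add[OF VP_var VP_var], of i m j c] by simp
lemma VPv3: "i < m \<Longrightarrow> j < m \<Longrightarrow> h < m \<Longrightarrow> (\<lambda>vs. (of_nat (vs!i) + of_nat (vs!j) + (of_nat (vs!h)::rat)) ^ c) \<in> VP m c"
  using VP_pow[OF VP_add[OF VP_add[OF VP_var VP_var] VP_var], of i m j h c] by simp

lemma L1mon:
  assumes "c + 2 \<le> k" "2 \<le> l"
  shows "S1 (\<lambda>u v. of_nat u * of_nat v ^ c) \<in> Fil_WL k l"
proof -
  define T where "T = S1 (\<lambda>u v. of_nat u * of_nat v ^ c)"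
  have T: "T = S1 (\<lambda>u v. of_nat v * of_nat u ^ c)" unfolding T_def by (rule conj1)
  have st: "S1 (\<lambda>u v. 1) * S1 (\<lambda>u v. of_nat u ^ c) = S2 (\<lambda>u1 u2 v1 v2. of_nat u2 ^ c) + S2 (\<lambda>u1 u2 v1 v2. of_nat u1 ^ c)
     + S1 (\<lambda>u v. \<Sum>k\<in>{1..<v}. (of_nat u :: rat) ^ c)"
    using stuffle11[of "\<lambda>u v. 1" "\<lambda>u v. of_nat u ^ c"] by simp
  have m: "S1 (\<lambda>u v. \<Sum>k\<in>{1..<v}. (of_nat u :: rat) ^ c) = T - S1 (\<lambda>u v. of_nat u ^ c)"
    unfolding T S1_diff[symmetric] by (rule S1_cong) (simp add: of_nat_diff algebra_simps)
  have Teq: "T = S1 (\<lambda>u v. 1) * S1 (\<lambda>u v. of_nat u ^ c) - S2 (\<lambda>u1 u2 v1 v2. of_nat u2 ^ c) - S2 (\<lambda>u1 u2 v1 v2. of_nat u1 ^ c)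
     + S1 (\<lambda>u v. of_nat u ^ c)"
    unfolding st m by simp
  have f1: "S1 (\<lambda>u v. (of_nat u :: rat) ^ c) \<in> Fil_WL k l"
    by (subst conj1, rule S1_VP'[OF VPv[of 0 1 c]]) (use assms in auto)
  have f2: "S2 (\<lambda>u1 u2 v1 v2. (of_nat u2 :: rat) ^ c) \<in> Fil_WL k l"
    by (subst conj2, rule S2_VP'[OF VPv[of 0 2 c]]) (use assms in auto)
  have f3: "S2 (\<lambda>u1 u2 v1 v2. (of_nat u1 :: rat) ^ c) \<in> Fil_WL k l"
    by (subst conj2, rule S2_VP'[OF VPv2[of 0 2 1 c]]) (use assms in auto)
  have f4: "S1 (\<lambda>u v. 1) * S1 (\<lambda>u v. of_nat u ^ c) \<in> Fil_WL k l"
  proof -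
    obtain f where f: "f \<in> UP (Suc c)" "\<forall>n>0. (\<Sum>k\<in>{1..<n}. (of_nat k :: rat) ^ c) = f n" using faul1 by blast
    have "S1 (\<lambda>u v. 1) * S1 (\<lambda>u v. of_nat u ^ c) = S1 (\<lambda>u v. 1) * S1 (\<lambda>u v. of_nat v ^ c)"
      by (subst (2) conj1) simp
    also have "\<dots> = S2 (\<lambda>u1 u2 v1 v2. of_nat v2 ^ c) + S2 (\<lambda>u1 u2 v1 v2. of_nat v1 ^ c)
     + S1 (\<lambda>u v. \<Sum>k\<in>{1..<v}. (of_nat (v - k) :: rat) ^ c)"
      using stuffle11[of "\<lambda>u v. 1" "\<lambda>u v. of_nat v ^ c"] by simp
    also have "\<dots> \<in> Fil_WL k l"
    proof (intro Fil_add)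
      show "S2 (\<lambda>u1 u2 v1 v2. (of_nat v2::rat) ^ c) \<in> Fil_WL k l"
        by (rule S2_VP'[OF VPv[of 1 2 c]]) (use assms in auto)
      show "S2 (\<lambda>u1 u2 v1 v2. (of_nat v1::rat) ^ c) \<in> Fil_WL k l"
        by (rule S2_VP'[OF VPv[of 0 2 c]]) (use assms in auto)
      show "S1 (\<lambda>u v. \<Sum>k\<in>{1..<v}. (of_nat (v - k) :: rat) ^ c) \<in> Fil_WL k l"
      proof (rule S1_VP'[OF UP_VP[OF f(1), of 0 1]])
        fix u v :: nat assume "0 < u" "0 < v"
        then show "(\<Sum>k\<in>{1..<v}. (of_nat (v - k) :: rat) ^ c) = f ([v] ! 0)"
          using f(2) by (simp only: sum_rev1[of "\<lambda>k. (of_nat k::rat) ^ c"]) simp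
      qed (use assms in auto)
    qed
    finally show ?thesis .
  qed
  show ?thesis unfolding T_def[symmetric] Teq
    by (intro Fil_add Fil_diff f1 f2 f3 f4)
qed

lemma L1poly: "P \<in> VP 1 d \<Longrightarrow> d + 2 \<le> k \<Longrightarrow> 2 \<le> l \<Longrightarrow> S1 (\<lambda>u v. of_nat u * P [v]) \<in> Fil_WL k l"
proof (induct rule: VP.induct)
  case (VP_mon e)
  then show ?case using L1mon[of "e 0" k l] by simp
next
  case (VP_add P Q)
  then show ?case by (simp add: distrib_left S1_add Fil_add)
next
  case (VP_smult P c)
  have "S1 (\<lambda>u v. of_nat u * (c * P [v])) = fps_const c * S1 (\<lambda>u v. of_nat u * P [v])"
    by (simp add: S1_cmult[symmetric] mult.left_commute)
  then show ?case using VP_smult by (simp add: Fil_smult)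
qed



lemma sum_rev2: "(\<Sum>k\<in>{1..<n::nat}. g k (n - k)) = (\<Sum>k\<in>{1..<n}. (g (n-k) k :: rat))"
  by (rule sum.reindex_bij_witness[where i="\<lambda>k. n - k" and j="\<lambda>k. n - k"]) auto

lemma sum_rev_pow: "(\<Sum>k\<in>{1..<n::nat}. (of_nat (n - k) :: rat) ^ a * X) = (\<Sum>k\<in>{1..<n}. of_nat k ^ a) * X"
  by (simp only: sum_distrib_right sum_rev1[of "\<lambda>k. (of_nat k::rat) ^ a * X"])
lemma sum_rev_pow2: "(\<Sum>k\<in>{1..<n::nat}. X * (of_nat (n - k) :: rat) ^ a) = X * (\<Sum>k\<in>{1..<n}. of_nat k ^ a)"
  by (simp only: sum_distrib_left sum_rev1[of "\<lambda>k. X * (of_nat k::rat) ^ a"])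

lemma card_merge: "(\<Sum>k\<in>{1..<v::nat}. (c::rat)) = (of_nat v - 1) * c" if "0 < v"
  using that by (simp add: of_nat_diff)

lemma Xlem:
  assumes k: "a + b + 3 \<le> k"
  shows "S2 (\<lambda>u1 u2 v1 v2. of_nat u1 * of_nat v1 ^ a * of_nat v2 ^ b) \<in> Fil_WL k 3"
proof -
  define H where "H = (\<lambda>(u1::nat) (u2::nat) (v1::nat) (v2::nat). (of_nat u2 :: rat) ^ a * of_nat (u1 - u2) ^ b)"
  define T where "T = S2 (\<lambda>u1 u2 v1 v2. of_nat u1 * of_nat v1 ^ a * of_nat v2 ^ b)"
  have T1: "T = S2 (\<lambda>u1 u2 v1 v2. (of_nat v1 + of_nat v2) * H u1 u2 v1 v2)"
    unfolding T_def H_def by (subst conj2) (rule S2_cong, simp add: mult.assoc)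
  have st: "S1 (\<lambda>u v. 1) * S2 H = S3 (\<lambda>u1 u2 u3 v1 v2 v3. H u2 u3 v2 v3) + S3 (\<lambda>u1 u2 u3 v1 v2 v3. H u1 u3 v1 v3)
     + S3 (\<lambda>u1 u2 u3 v1 v2 v3. H u1 u2 v1 v2)
     + S2 (\<lambda>u1 u2 v1 v2. \<Sum>k\<in>{1..<v1}. H u1 u2 (v1-k) v2)
     + S2 (\<lambda>u1 u2 v1 v2. \<Sum>k\<in>{1..<v2}. H u1 u2 v1 (v2-k))"
    using stuffle12[of "\<lambda>u v. 1" H] by simp
  have mg: "S2 (\<lambda>u1 u2 v1 v2. \<Sum>k\<in>{1..<v1}. H u1 u2 (v1-k) v2) + S2 (\<lambda>u1 u2 v1 v2. \<Sum>k\<in>{1..<v2}. H u1 u2 v1 (v2-k))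
     + fps_const 2 * S2 H = T"
    unfolding T1 S2_add[symmetric] S2_cmult[symmetric]
    by (rule S2_cong) (simp add: H_def card_merge algebra_simps)
  have Teq: "T = S1 (\<lambda>u v. 1) * S2 H - S3 (\<lambda>u1 u2 u3 v1 v2 v3. H u2 u3 v2 v3) - S3 (\<lambda>u1 u2 u3 v1 v2 v3. H u1 u3 v1 v3)
     - S3 (\<lambda>u1 u2 u3 v1 v2 v3. H u1 u2 v1 v2) + fps_const 2 * S2 H"
    unfolding mg[symmetric] st by (simp add: algebra_simps)
  have H2: "S2 H = S2 (\<lambda>u1 u2 v1 v2. of_nat v1 ^ a * of_nat v2 ^ b)"
    unfolding H_def by (subst conj2) (rule S2_cong, simp)
  have fH: "S2 H \<in> Fil_WL k 3"
    unfolding H2 by (rule S2_VP'[OF VP_mult[OF VPv[of 0 2 a] VPv[of 1 2 b]]]) (use k in auto)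
  have fX1: "S3 (\<lambda>u1 u2 u3 v1 v2 v3. H u2 u3 v2 v3) \<in> Fil_WL k 3"
    by (subst conj3, rule S3_VP'[OF VP_mult[OF VPv[of 0 3 a] VPv[of 1 3 b]]]) (use k in \<open>auto simp: H_def\<close>)
  have fX2: "S3 (\<lambda>u1 u2 u3 v1 v2 v3. H u1 u3 v1 v3) \<in> Fil_WL k 3"
    by (subst conj3, rule S3_VP'[OF VP_mult[OF VPv[of 0 3 a] VPv2[of 1 3 2 b]]]) (use k in \<open>auto simp: H_def\<close>)
  have fX3: "S3 (\<lambda>u1 u2 u3 v1 v2 v3. H u1 u2 v1 v2) \<in> Fil_WL k 3"
    by (subst conj3, rule S3_VP'[OF VP_mult[OF VPv2[of 0 3 1 a] VPv[of 2 3 b]]]) (use k in \<open>auto simp: H_def\<close>)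
  have fP: "S1 (\<lambda>u v. 1) * S2 H \<in> Fil_WL k 3"
  proof -
    obtain f where f: "f \<in> UP (Suc a)" "\<forall>n>0. (\<Sum>k\<in>{1..<n}. (of_nat k :: rat) ^ a) = f n" using faul1 by blast
    obtain g where g: "g \<in> UP (Suc b)" "\<forall>n>0. (\<Sum>k\<in>{1..<n}. (of_nat k :: rat) ^ b) = g n" using faul1 by blast
    have "S1 (\<lambda>u v. 1) * S2 H = S3 (\<lambda>u1 u2 u3 v1 v2 v3. of_nat v2 ^ a * of_nat v3 ^ b) + S3 (\<lambda>u1 u2 u3 v1 v2 v3. of_nat v1 ^ a * of_nat v3 ^ b)
     + S3 (\<lambda>u1 u2 u3 v1 v2 v3. of_nat v1 ^ a * of_nat v2 ^ b)
     + S2 (\<lambda>u1 u2 v1 v2. \<Sum>k\<in>{1..<v1}. of_nat (v1-k) ^ a * of_nat v2 ^ b)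
     + S2 (\<lambda>u1 u2 v1 v2. \<Sum>k\<in>{1..<v2}. of_nat v1 ^ a * of_nat (v2-k) ^ b)"
      unfolding H2 using stuffle12[of "\<lambda>u v. 1" "\<lambda>u1 u2 v1 v2. of_nat v1 ^ a * of_nat v2 ^ b"] by simp
    also have "\<dots> \<in> Fil_WL k 3"
    proof (intro Fil_add)
      show "S3 (\<lambda>u1 u2 u3 v1 v2 v3. (of_nat v2::rat) ^ a * of_nat v3 ^ b) \<in> Fil_WL k 3"
        by (rule S3_VP'[OF VP_mult[OF VPv[of 1 3 a] VPv[of 2 3 b]]]) (use k in auto)
      show "S3 (\<lambda>u1 u2 u3 v1 v2 v3. (of_nat v1::rat) ^ a * of_nat v3 ^ b) \<in> Fil_WL k 3"
        by (rule S3_VP'[OF VP_mult[OF VPv[of 0 3 a] VPv[of 2 3 b]]]) (use k in auto)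
      show "S3 (\<lambda>u1 u2 u3 v1 v2 v3. (of_nat v1::rat) ^ a * of_nat v2 ^ b) \<in> Fil_WL k 3"
        by (rule S3_VP'[OF VP_mult[OF VPv[of 0 3 a] VPv[of 1 3 b]]]) (use k in auto)
      show "S2 (\<lambda>u1 u2 v1 v2. \<Sum>k\<in>{1..<v1}. (of_nat (v1-k)::rat) ^ a * of_nat v2 ^ b) \<in> Fil_WL k 3"
      proof (rule S2_VP'[OF VP_mult[OF UP_VP[OF f(1), of 0 2] VPv[of 1 2 b]]])
        fix u1 u2 v1 v2 :: nat assume "0 < v1"
        then show "(\<Sum>k\<in>{1..<v1}. (of_nat (v1-k)::rat) ^ a * of_nat v2 ^ b) = f ([v1,v2] ! 0) * of_nat ([v1,v2] ! 1) ^ b"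
          using f(2) by (simp only: sum_rev_pow) simp
      qed (use k in auto)
      show "S2 (\<lambda>u1 u2 v1 v2. \<Sum>k\<in>{1..<v2}. (of_nat v1::rat) ^ a * of_nat (v2-k) ^ b) \<in> Fil_WL k 3"
      proof (rule S2_VP'[OF VP_mult[OF VPv[of 0 2 a] UP_VP[OF g(1), of 1 2]]])
        fix u1 u2 v1 v2 :: nat assume "0 < v2"
        then show "(\<Sum>k\<in>{1..<v2}. (of_nat v1::rat) ^ a * of_nat (v2-k) ^ b) = of_nat ([v1,v2] ! 0) ^ a * g ([v1,v2] ! 1)"
          using g(2) by (simp only: sum_rev_pow2) simp
      qed (use k in auto)
    qed
    finally show ?thesis .
  qed
  show ?thesis unfolding T_def[symmetric] Teq
    by (intro Fil_add Fil_diff Fil_smult fP fX1 fX2 fX3 fH)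
qed



lemma Y0lem:
  assumes k: "a + 3 \<le> k"
  shows "S2 (\<lambda>u1 u2 v1 v2. of_nat u2 * of_nat v1 ^ a) \<in> Fil_WL k 3"
proof -
  obtain f where f: "f \<in> UP (Suc a)" "\<forall>n>0. (\<Sum>k\<in>{1..<n}. (of_nat k :: rat) ^ a) = f n" using faul1 by blast
  obtain f2 where f2: "f2 \<in> UP (a+2)" "\<forall>n>0. (\<Sum>k\<in>{1..<n}. (of_nat k :: rat) ^ a * of_nat (n - k)) = f2 n" using faul2 by blast
  have st: "S1 (\<lambda>u v. of_nat v ^ a) * S1 (\<lambda>u v. of_nat u) = S2 (\<lambda>u1 u2 v1 v2. of_nat v1 ^ a * of_nat u2) + S2 (\<lambda>u1 u2 v1 v2. of_nat v2 ^ a * of_nat u1)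
     + S1 (\<lambda>u v. \<Sum>k\<in>{1..<v}. (of_nat k :: rat) ^ a * of_nat u)"
    using stuffle11[of "\<lambda>u v. of_nat v ^ a" "\<lambda>u v. of_nat u"] by simp
  have T: "S2 (\<lambda>u1 u2 v1 v2. of_nat u2 * of_nat v1 ^ a) = S1 (\<lambda>u v. of_nat v ^ a) * S1 (\<lambda>u v. of_nat u)
     - S2 (\<lambda>u1 u2 v1 v2. of_nat v2 ^ a * of_nat u1) - S1 (\<lambda>u v. \<Sum>k\<in>{1..<v}. (of_nat k :: rat) ^ a * of_nat u)"
    unfolding st by (simp add: mult.commute)
  have fA: "S2 (\<lambda>u1 u2 v1 v2. (of_nat v2 :: rat) ^ a * of_nat u1) \<in> Fil_WL k 3"
  proof -
    have "S2 (\<lambda>u1 u2 v1 v2. (of_nat v2 :: rat) ^ a * of_nat u1) = S2 (\<lambda>u1 u2 v1 v2. of_nat u1 * of_nat v1 ^ 0 * of_nat v2 ^ a)"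
      by (simp add: mult.commute)
    then show ?thesis using Xlem[of 0 a k] k by simp
  qed
  have fB: "S1 (\<lambda>u v. \<Sum>k\<in>{1..<v}. (of_nat k :: rat) ^ a * of_nat u) \<in> Fil_WL k 3"
  proof -
    have "S1 (\<lambda>u v. \<Sum>k\<in>{1..<v}. (of_nat k :: rat) ^ a * of_nat u) = S1 (\<lambda>u v. of_nat u * (\<lambda>vs. f (vs!0)) [v])"
    proof (rule S1_cong)
      fix u v :: nat assume "0 < u" "0 < v"
      then show "(\<Sum>k\<in>{1..<v}. (of_nat k :: rat) ^ a * of_nat u) = of_nat u * (\<lambda>vs. f (vs!0)) [v]"
        using f(2) by (simp only: sum_distrib_right[symmetric]) (simp add: mult.commute)
    qed
    then show ?thesis using L1poly[OF UP_VP[OF f(1), of 0 1], of k 3] k by simp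
  qed
  have fC: "S1 (\<lambda>u v. of_nat v ^ a) * S1 (\<lambda>u v. of_nat u) \<in> Fil_WL k 3"
  proof -
    have "S1 (\<lambda>u v. of_nat v ^ a) * S1 (\<lambda>u v. of_nat u) = S1 (\<lambda>u v. of_nat v ^ a) * S1 (\<lambda>u v. of_nat v)"
      by (subst (2) conj1) simp
    also have "\<dots> = S2 (\<lambda>u1 u2 v1 v2. of_nat v1 ^ a * of_nat v2) + S2 (\<lambda>u1 u2 v1 v2. of_nat v2 ^ a * of_nat v1)
     + S1 (\<lambda>u v. \<Sum>k\<in>{1..<v}. (of_nat k :: rat) ^ a * of_nat (v - k))"
      using stuffle11[of "\<lambda>u v. of_nat v ^ a" "\<lambda>u v. of_nat v"] by simp
    also have "\<dots> \<in> Fil_WL k 3"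
    proof (intro Fil_add)
      show "S2 (\<lambda>u1 u2 v1 v2. (of_nat v1::rat) ^ a * of_nat v2) \<in> Fil_WL k 3"
        by (rule S2_VP'[OF VP_mult[OF VPv[of 0 2 a] VP_var[of 1 2]]]) (use k in auto)
      show "S2 (\<lambda>u1 u2 v1 v2. (of_nat v2::rat) ^ a * of_nat v1) \<in> Fil_WL k 3"
        by (rule S2_VP'[OF VP_mult[OF VPv[of 1 2 a] VP_var[of 0 2]]]) (use k in auto)
      show "S1 (\<lambda>u v. \<Sum>k\<in>{1..<v}. (of_nat k :: rat) ^ a * of_nat (v - k)) \<in> Fil_WL k 3"
      proof (rule S1_VP'[OF UP_VP[OF f2(1), of 0 1]])
        fix u v :: nat assume "0 < u" "0 < v"
        then show "(\<Sum>k\<in>{1..<v}. (of_nat k :: rat) ^ a * of_nat (v - k)) = f2 ([v] ! 0)"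
          using f2(2) by simp
      qed (use k in auto)
    qed
    finally show ?thesis .
  qed
  show ?thesis unfolding T by (intro Fil_diff fA fB fC)
qed



lemma Yblem:
  assumes k: "a + b + 4 \<le> k"
  shows "S2 (\<lambda>u1 u2 v1 v2. of_nat u2 * of_nat v1 ^ a * of_nat v2 ^ Suc b) \<in> Fil_WL k 3"
proof -
  define G where "G = (\<lambda>(u1::nat) (u2::nat) (v1::nat) (v2::nat). (of_nat u2 :: rat) ^ a * of_nat (u1 - u2) ^ b)"
  define G2 where "G2 = (\<lambda>(u1::nat) (u2::nat) (v1::nat) (v2::nat). of_nat u2 * G u1 u2 v1 v2)"
  define T where "T = S2 (\<lambda>u1 u2 v1 v2. of_nat u2 * of_nat v1 ^ a * of_nat v2 ^ Suc b)"
  have T1: "T = S2 (\<lambda>u1 u2 v1 v2. of_nat v1 * (of_nat u2 ^ a * of_nat (u1 - u2) ^ Suc b))"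
    unfolding T_def by (subst conj2) (rule S2_cong, simp)
  have st1: "S1 (\<lambda>u v. of_nat u) * S2 G = S3 (\<lambda>u1 u2 u3 v1 v2 v3. of_nat u1 * G u2 u3 v2 v3) + S3 (\<lambda>u1 u2 u3 v1 v2 v3. of_nat u2 * G u1 u3 v1 v3)
     + S3 (\<lambda>u1 u2 u3 v1 v2 v3. of_nat u3 * G u1 u2 v1 v2)
     + S2 (\<lambda>u1 u2 v1 v2. \<Sum>k\<in>{1..<v1}. of_nat u1 * G u1 u2 (v1-k) v2)
     + S2 (\<lambda>u1 u2 v1 v2. \<Sum>k\<in>{1..<v2}. of_nat u2 * G u1 u2 v1 (v2-k))"
    using stuffle12[of "\<lambda>u v. of_nat u" G] by simp
  have st2: "S1 (\<lambda>u v. 1) * S2 G2 = S3 (\<lambda>u1 u2 u3 v1 v2 v3. G2 u2 u3 v2 v3) + S3 (\<lambda>u1 u2 u3 v1 v2 v3. G2 u1 u3 v1 v3)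
     + S3 (\<lambda>u1 u2 u3 v1 v2 v3. G2 u1 u2 v1 v2)
     + S2 (\<lambda>u1 u2 v1 v2. \<Sum>k\<in>{1..<v1}. G2 u1 u2 (v1-k) v2)
     + S2 (\<lambda>u1 u2 v1 v2. \<Sum>k\<in>{1..<v2}. G2 u1 u2 v1 (v2-k))"
    using stuffle12[of "\<lambda>u v. 1" G2] by simp
  have mg: "(S2 (\<lambda>u1 u2 v1 v2. \<Sum>k\<in>{1..<v1}. of_nat u1 * G u1 u2 (v1-k) v2) + S2 (\<lambda>u1 u2 v1 v2. \<Sum>k\<in>{1..<v2}. of_nat u2 * G u1 u2 v1 (v2-k)))
     - (S2 (\<lambda>u1 u2 v1 v2. \<Sum>k\<in>{1..<v1}. G2 u1 u2 (v1-k) v2) + S2 (\<lambda>u1 u2 v1 v2. \<Sum>k\<in>{1..<v2}. G2 u1 u2 v1 (v2-k)))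
     + S2 (\<lambda>u1 u2 v1 v2. of_nat (u1 - u2) * G u1 u2 v1 v2) = T"
    unfolding T1 S2_add[symmetric] S2_diff[symmetric]
  proof (rule S2_cong)
    fix u1 u2 v1 v2 :: nat assume h: "u2 < u1" "0 < u2" "0 < v1" "0 < v2"
    have d: "(of_nat (u1 - u2) :: rat) = of_nat u1 - of_nat u2" using h by (simp add: of_nat_diff)
    show "(\<Sum>k\<in>{1..<v1}. of_nat u1 * G u1 u2 (v1-k) v2) + (\<Sum>k\<in>{1..<v2}. of_nat u2 * G u1 u2 v1 (v2-k))
     - ((\<Sum>k\<in>{1..<v1}. G2 u1 u2 (v1-k) v2) + (\<Sum>k\<in>{1..<v2}. G2 u1 u2 v1 (v2-k)))
     + of_nat (u1 - u2) * G u1 u2 v1 v2 = of_nat v1 * (of_nat u2 ^ a * of_nat (u1 - u2) ^ Suc b)"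
      unfolding G2_def G_def using h by (simp add: card_merge d algebra_simps)
  qed
  have Teq: "T = (S1 (\<lambda>u v. of_nat u) * S2 G - S3 (\<lambda>u1 u2 u3 v1 v2 v3. of_nat u1 * G u2 u3 v2 v3) - S3 (\<lambda>u1 u2 u3 v1 v2 v3. of_nat u2 * G u1 u3 v1 v3)
     - S3 (\<lambda>u1 u2 u3 v1 v2 v3. of_nat u3 * G u1 u2 v1 v2))
     - (S1 (\<lambda>u v. 1) * S2 G2 - S3 (\<lambda>u1 u2 u3 v1 v2 v3. G2 u2 u3 v2 v3) - S3 (\<lambda>u1 u2 u3 v1 v2 v3. G2 u1 u3 v1 v3)
     - S3 (\<lambda>u1 u2 u3 v1 v2 v3. G2 u1 u2 v1 v2))
     + S2 (\<lambda>u1 u2 v1 v2. of_nat (u1 - u2) * G u1 u2 v1 v2)"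
    unfolding mg[symmetric] st1 st2 by (simp add: algebra_simps)
  have kk: "Suc (a + b) + 3 \<le> k" using k by simp
  have fX1: "S3 (\<lambda>u1 u2 u3 v1 v2 v3. of_nat u1 * G u2 u3 v2 v3) \<in> Fil_WL k 3"
    by (subst conj3, rule S3_VP'[OF VP_mult[OF VP_mult[OF VPv3[of 0 3 1 2 1] VPv[of 0 3 a]] VPv[of 1 3 b]]])
       (use k in \<open>auto simp: G_def\<close>)
  have fX2: "S3 (\<lambda>u1 u2 u3 v1 v2 v3. of_nat u2 * G u1 u3 v1 v3) \<in> Fil_WL k 3"
    by (subst conj3, rule S3_VP'[OF VP_mult[OF VP_mult[OF VPv2[of 0 3 1 1] VPv[of 0 3 a]] VPv2[of 1 3 2 b]]])
       (use k in \<open>auto simp: G_def\<close>)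
  have fX3: "S3 (\<lambda>u1 u2 u3 v1 v2 v3. of_nat u3 * G u1 u2 v1 v2) \<in> Fil_WL k 3"
    by (subst conj3, rule S3_VP'[OF VP_mult[OF VP_mult[OF VPv[of 0 3 1] VPv2[of 0 3 1 a]] VPv[of 2 3 b]]])
       (use k in \<open>auto simp: G_def\<close>)
  have fY1: "S3 (\<lambda>u1 u2 u3 v1 v2 v3. G2 u2 u3 v2 v3) \<in> Fil_WL k 3"
    by (subst conj3, rule S3_VP'[OF VP_mult[OF VP_mult[OF VPv[of 0 3 1] VPv[of 0 3 a]] VPv[of 1 3 b]]])
       (use k in \<open>auto simp: G2_def G_def\<close>)
  have fY2: "S3 (\<lambda>u1 u2 u3 v1 v2 v3. G2 u1 u3 v1 v3) \<in> Fil_WL k 3"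
    by (subst conj3, rule S3_VP'[OF VP_mult[OF VP_mult[OF VPv[of 0 3 1] VPv[of 0 3 a]] VPv2[of 1 3 2 b]]])
       (use k in \<open>auto simp: G2_def G_def\<close>)
  have fY3: "S3 (\<lambda>u1 u2 u3 v1 v2 v3. G2 u1 u2 v1 v2) \<in> Fil_WL k 3"
    by (subst conj3, rule S3_VP'[OF VP_mult[OF VP_mult[OF VPv2[of 0 3 1 1] VPv2[of 0 3 1 a]] VPv[of 2 3 b]]])
       (use k in \<open>auto simp: G2_def G_def\<close>)
  have fE: "S2 (\<lambda>u1 u2 v1 v2. of_nat (u1 - u2) * G u1 u2 v1 v2) \<in> Fil_WL k 3"
    by (subst conj2, rule S2_VP'[OF VP_mult[OF VP_mult[OF VPv[of 1 2 1] VPv[of 0 2 a]] VPv[of 1 2 b]]])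
       (use k in \<open>auto simp: G_def\<close>)
  have fP1: "S1 (\<lambda>u v. of_nat u) * S2 G \<in> Fil_WL k 3"
  proof -
    obtain f where f: "f \<in> UP (a+2)" "\<forall>n>0. (\<Sum>k\<in>{1..<n}. (of_nat k :: rat) ^ a * of_nat (n - k)) = f n" using faul2 by blast
    obtain g where g: "g \<in> UP (b+2)" "\<forall>n>0. (\<Sum>k\<in>{1..<n}. (of_nat k :: rat) ^ b * of_nat (n - k)) = g n" using faul2 by blast
    have "S1 (\<lambda>u v. of_nat u) * S2 G = S1 (\<lambda>u v. of_nat v) * S2 (\<lambda>u1 u2 v1 v2. of_nat v1 ^ a * of_nat v2 ^ b)"
      by (subst conj1, subst conj2) (simp add: G_def)
    also have "\<dots> = S3 (\<lambda>u1 u2 u3 v1 v2 v3. of_nat v1 * (of_nat v2 ^ a * of_nat v3 ^ b)) + S3 (\<lambda>u1 u2 u3 v1 v2 v3. of_nat v2 * (of_nat v1 ^ a * of_nat v3 ^ b))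
     + S3 (\<lambda>u1 u2 u3 v1 v2 v3. of_nat v3 * (of_nat v1 ^ a * of_nat v2 ^ b))
     + S2 (\<lambda>u1 u2 v1 v2. \<Sum>k\<in>{1..<v1}. of_nat k * (of_nat (v1-k) ^ a * of_nat v2 ^ b))
     + S2 (\<lambda>u1 u2 v1 v2. \<Sum>k\<in>{1..<v2}. of_nat k * (of_nat v1 ^ a * of_nat (v2-k) ^ b))"
      by (rule stuffle12)
    also have "\<dots> \<in> Fil_WL k 3"
    proof (intro Fil_add)
      show "S3 (\<lambda>u1 u2 u3 v1 v2 v3. (of_nat v1::rat) * (of_nat v2 ^ a * of_nat v3 ^ b)) \<in> Fil_WL k 3"
        by (rule S3_VP'[OF VP_mult[OF VPv[of 0 3 1] VP_mult[OF VPv[of 1 3 a] VPv[of 2 3 b]]]]) (use k in auto)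
      show "S3 (\<lambda>u1 u2 u3 v1 v2 v3. (of_nat v2::rat) * (of_nat v1 ^ a * of_nat v3 ^ b)) \<in> Fil_WL k 3"
        by (rule S3_VP'[OF VP_mult[OF VPv[of 1 3 1] VP_mult[OF VPv[of 0 3 a] VPv[of 2 3 b]]]]) (use k in auto)
      show "S3 (\<lambda>u1 u2 u3 v1 v2 v3. (of_nat v3::rat) * (of_nat v1 ^ a * of_nat v2 ^ b)) \<in> Fil_WL k 3"
        by (rule S3_VP'[OF VP_mult[OF VPv[of 2 3 1] VP_mult[OF VPv[of 0 3 a] VPv[of 1 3 b]]]]) (use k in auto)
      show "S2 (\<lambda>u1 u2 v1 v2. \<Sum>k\<in>{1..<v1}. (of_nat k::rat) * (of_nat (v1-k) ^ a * of_nat v2 ^ b)) \<in> Fil_WL k 3"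
      proof (rule S2_VP'[OF VP_mult[OF UP_VP[OF f(1), of 0 2] VPv[of 1 2 b]]])
        fix u1 u2 v1 v2 :: nat assume "0 < v1"
        have "(\<Sum>k\<in>{1..<v1}. (of_nat k::rat) * (of_nat (v1-k) ^ a * of_nat v2 ^ b))
            = (\<Sum>k\<in>{1..<v1}. (of_nat (v1 - k)::rat) * (of_nat k ^ a * of_nat v2 ^ b))"
          by (rule sum_rev2[of "\<lambda>k j. (of_nat k::rat) * (of_nat j ^ a * of_nat v2 ^ b)" v1])
        also have "\<dots> = (\<Sum>k\<in>{1..<v1}. (of_nat k :: rat) ^ a * of_nat (v1 - k)) * of_nat v2 ^ b"
          by (simp only: sum_distrib_right) (rule sum.cong[OF refl], simp only: mult_ac)
        finally show "(\<Sum>k\<in>{1..<v1}. (of_nat k::rat) * (of_nat (v1-k) ^ a * of_nat v2 ^ b)) = f ([v1,v2] ! 0) * of_nat ([v1,v2] ! 1) ^ b"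
          using f(2) \<open>0 < v1\<close> by simp
      qed (use k in auto)
      show "S2 (\<lambda>u1 u2 v1 v2. \<Sum>k\<in>{1..<v2}. (of_nat k::rat) * (of_nat v1 ^ a * of_nat (v2-k) ^ b)) \<in> Fil_WL k 3"
      proof (rule S2_VP'[OF VP_mult[OF VPv[of 0 2 a] UP_VP[OF g(1), of 1 2]]])
        fix u1 u2 v1 v2 :: nat assume "0 < v2"
        have "(\<Sum>k\<in>{1..<v2}. (of_nat k::rat) * (of_nat v1 ^ a * of_nat (v2-k) ^ b))
            = (\<Sum>k\<in>{1..<v2}. (of_nat (v2 - k)::rat) * (of_nat v1 ^ a * of_nat k ^ b))"
          by (rule sum_rev2[of "\<lambda>k j. (of_nat k::rat) * (of_nat v1 ^ a * of_nat j ^ b)" v2])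
        also have "\<dots> = of_nat v1 ^ a * (\<Sum>k\<in>{1..<v2}. (of_nat k :: rat) ^ b * of_nat (v2 - k))"
          by (simp add: sum_distrib_left mult_ac)
        finally show "(\<Sum>k\<in>{1..<v2}. (of_nat k::rat) * (of_nat v1 ^ a * of_nat (v2-k) ^ b)) = of_nat ([v1,v2] ! 0) ^ a * g ([v1,v2] ! 1)"
          using g(2) \<open>0 < v2\<close> by simp
      qed (use k in auto)
    qed
    finally show ?thesis .
  qed
  have fP2: "S1 (\<lambda>u v. 1) * S2 G2 \<in> Fil_WL k 3"
  proof -
    obtain f where f: "f \<in> UP (Suc (Suc a))" "\<forall>n>0. (\<Sum>k\<in>{1..<n}. (of_nat k :: rat) ^ Suc a) = f n" using faul1 by blast
    obtain g where g: "g \<in> UP (Suc b)" "\<forall>n>0. (\<Sum>k\<in>{1..<n}. (of_nat k :: rat) ^ b) = g n" using faul1 by blast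
    have "S1 (\<lambda>u v. 1) * S2 G2 = S1 (\<lambda>u v. 1) * S2 (\<lambda>u1 u2 v1 v2. of_nat v1 ^ Suc a * of_nat v2 ^ b)"
      by (subst conj2) (simp add: G2_def G_def mult.assoc)
    also have "\<dots> = S3 (\<lambda>u1 u2 u3 v1 v2 v3. of_nat v2 ^ Suc a * of_nat v3 ^ b) + S3 (\<lambda>u1 u2 u3 v1 v2 v3. of_nat v1 ^ Suc a * of_nat v3 ^ b)
     + S3 (\<lambda>u1 u2 u3 v1 v2 v3. of_nat v1 ^ Suc a * of_nat v2 ^ b)
     + S2 (\<lambda>u1 u2 v1 v2. \<Sum>k\<in>{1..<v1}. of_nat (v1-k) ^ Suc a * of_nat v2 ^ b)
     + S2 (\<lambda>u1 u2 v1 v2. \<Sum>k\<in>{1..<v2}. of_nat v1 ^ Suc a * of_nat (v2-k) ^ b)"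
      using stuffle12[of "\<lambda>u v. 1" "\<lambda>u1 u2 v1 v2. of_nat v1 ^ Suc a * of_nat v2 ^ b"] by simp
    also have "\<dots> \<in> Fil_WL k 3"
    proof (intro Fil_add)
      show "S3 (\<lambda>u1 u2 u3 v1 v2 v3. (of_nat v2::rat) ^ Suc a * of_nat v3 ^ b) \<in> Fil_WL k 3"
        by (rule S3_VP'[OF VP_mult[OF VPv[of 1 3 "Suc a"] VPv[of 2 3 b]]]) (use k in auto)
      show "S3 (\<lambda>u1 u2 u3 v1 v2 v3. (of_nat v1::rat) ^ Suc a * of_nat v3 ^ b) \<in> Fil_WL k 3"
        by (rule S3_VP'[OF VP_mult[OF VPv[of 0 3 "Suc a"] VPv[of 2 3 b]]]) (use k in auto)
      show "S3 (\<lambda>u1 u2 u3 v1 v2 v3. (of_nat v1::rat) ^ Suc a * of_nat v2 ^ b) \<in> Fil_WL k 3"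
        by (rule S3_VP'[OF VP_mult[OF VPv[of 0 3 "Suc a"] VPv[of 1 3 b]]]) (use k in auto)
      show "S2 (\<lambda>u1 u2 v1 v2. \<Sum>k\<in>{1..<v1}. (of_nat (v1-k)::rat) ^ Suc a * of_nat v2 ^ b) \<in> Fil_WL k 3"
      proof (rule S2_VP'[OF VP_mult[OF UP_VP[OF f(1), of 0 2] VPv[of 1 2 b]]])
        fix u1 u2 v1 v2 :: nat assume "0 < v1"
        then show "(\<Sum>k\<in>{1..<v1}. (of_nat (v1-k)::rat) ^ Suc a * of_nat v2 ^ b) = f ([v1,v2] ! 0) * of_nat ([v1,v2] ! 1) ^ b"
          using f(2) by (simp only: sum_rev_pow) simp
      qed (use k in auto)
      show "S2 (\<lambda>u1 u2 v1 v2. \<Sum>k\<in>{1..<v2}. (of_nat v1::rat) ^ Suc a * of_nat (v2-k) ^ b) \<in> Fil_WL k 3"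
      proof (rule S2_VP'[OF VP_mult[OF VPv[of 0 2 "Suc a"] UP_VP[OF g(1), of 1 2]]])
        fix u1 u2 v1 v2 :: nat assume "0 < v2"
        then show "(\<Sum>k\<in>{1..<v2}. (of_nat v1::rat) ^ Suc a * of_nat (v2-k) ^ b) = of_nat ([v1,v2] ! 0) ^ Suc a * g ([v1,v2] ! 1)"
          using g(2) by (simp only: sum_rev_pow2) simp
      qed (use k in auto)
    qed
    finally show ?thesis .
  qed
  show ?thesis unfolding T_def[symmetric] Teq
    by (intro Fil_add Fil_diff fP1 fP2 fX1 fX2 fX3 fY1 fY2 fY3 fE)
qed



theorem proposition5p9:
  fixes s1 s2 :: nat
  assumes "1 \<le> s1" and "1 \<le> s2"
  shows "bibracket [s1, s2] [1, 0] \<in> Fil_WL (s1 + s2 + 1) 3 \<and>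
         bibracket [s1, s2] [0, 1] \<in> Fil_WL (s1 + s2 + 1) 3"
proof -
  obtain a where a: "s1 = Suc a" using assms(1) by (cases s1) auto
  obtain b where b: "s2 = Suc b" using assms(2) by (cases s2) auto
  have k: "s1 + s2 + 1 = a + b + 3" using a b by simp
  have e1: "bibracket [s1, s2] [1, 0] = fps_const (1 / (fact a * fact b)) * S2 (\<lambda>u1 u2 v1 v2. of_nat u1 * of_nat v1 ^ a * of_nat v2 ^ b)"
    unfolding bibracket2 S2_cmult[symmetric] a b by (rule S2_cong) simp
  have e2: "bibracket [s1, s2] [0, 1] = fps_const (1 / (fact a * fact b)) * S2 (\<lambda>u1 u2 v1 v2. of_nat u2 * of_nat v1 ^ a * of_nat v2 ^ b)"
    unfolding bibracket2 S2_cmult[symmetric] a b by (rule S2_cong) simp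
  have X: "bibracket [s1, s2] [1, 0] \<in> Fil_WL (s1 + s2 + 1) 3"
    unfolding e1 k by (rule Fil_smult, rule Xlem) simp
  have Y: "S2 (\<lambda>u1 u2 v1 v2. of_nat u2 * of_nat v1 ^ a * of_nat v2 ^ b) \<in> Fil_WL (a + b + 3) 3"
  proof (cases b)
    case 0
    then show ?thesis using Y0lem[of a "a + 3"] by simp
  next
    case (Suc b')
    then show ?thesis using Yblem[of a b' "a + b + 3"] by simp
  qed
  have Y': "bibracket [s1, s2] [0, 1] \<in> Fil_WL (s1 + s2 + 1) 3"
    unfolding e2 k by (rule Fil_smult[OF Y])
  show ?thesis using X Y' by blast
qed


end
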